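(* Assume (A1)–(A4) and that for every $K\ge1$, $0<H(P^\star|\Pi_{K+1})<H(P^\star|\Pi_K)$. Then $P^\star\notin\Pi_\infty$ and, $P^\star$-a.s., $\liminf_{n\to\infty}\widehat K_n^L=\liminf_{n\to\infty}\widehat K_n^G=\infty$ (here $\widehat K_n^G$ is the smallest maximizer of $K\mapsto \mathrm{crit}(n,K)$ over all $K\ge1$).
   Context: Setting: $(\mathcal Z,\mathcal F)$ is a Polish space with its Borel $\sigma$-field and $\mu$ a $\sigma$-finite measure on it. $Z_1,Z_2,\dots$ are i.i.d. $\mathcal Z$-valued random variables with common law $P^\star\ll\mu$, density $p^\star$, $\ell^\star=\log p^\star$; $P^\star$ also denotes the law of the whole sequence. $\{(\Theta_K,d)\}_{K\ge1}$ is an increasing (nested) sequence of metric spaces, $\Theta_\infty=\bigcup_K\Theta_K$; for $\theta\in\Theta_\infty$, $P_\theta$ is a probability measure with density $p_\theta$ w.r.t. $\mu$ and $\ell_\theta=\log p_\theta$. $\Pi_K=\{P_\theta:\theta\in\Theta_K\}$, $\Pi_\infty=\bigcup_K\Pi_K$. $H(P|Q)=\int\log(dP/dQ)\,dP$ if $P\ll Q$ and $+\infty$ otherwise; $H(P|\Pi)=\inf_{Q\in\Pi}H(P|Q)$. Given a penalty $\mathrm{pen}(n,K)>0$, $\mathrm{crit}(n,K)=\sup_{\theta\in\Theta_K}\sum_{i=1}^n\ell_\theta(Z_i)-\mathrm{pen}(n,K)$, $\widehat K_n^L=\inf\{K\ge1:\mathrm{crit}(n,K)\ge\mathrm{crit}(n,K+1)\}$.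 All suprema are assumed measurable. Standing assumptions: (A1) each $(\Theta_K,d)$ is compact and each $\Pi_K$ is compact for the weak topology; (A2) for each $z$ and $K$, $\theta\mapsto\ell_\theta(z)$ is continuous on $\Theta_K$; (A3) there are $l,u:\mathcal Z\to\mathbb R$ with $u-l\in L^1(P^\star)$, $l\le\ell^\star\le u$ and $l\le\ell_\theta\le u$ for all $\theta\in\Theta_\infty$; (A4) for each $n$, $\mathrm{pen}(n,\cdot)$ is increasing, and for each $K$, $\mathrm{pen}(n,K)\to\infty$ and $\mathrm{pen}(n,K)=o(n)$ as $n\to\infty$. *)

theory Defs
  imports "HOL-Probability.Probability"
begin

definition prob_measures :: "'z::topological_space measure set" where
  "prob_measures = {P. prob_space P \<and> sets P = sets (borel :: 'z measure)}"

definition bcont :: "('z::topological_space \<Rightarrow> real) \<Rightarrow> bool" where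
  "bcont f \<longleftrightarrow> continuous_on UNIV f \<and> bounded (range f)"

definition weak_topology :: "'z::topological_space measure topology" where
  "weak_topology = topology_generated_by
     {{P \<in> prob_measures. (\<integral>x. f x \<partial>P) \<in> U} | f U. bcont f \<and> open U}"

text \<open>Relative entropy H(P|Q) = int log(dP/dQ) dP if P << Q, +infinity otherwise.
  The integral is split into positive and negative parts (the negative part is finite
  for probability measures).\<close>
definition rel_entropy :: "'z measure \<Rightarrow> 'z measure \<Rightarrow> ereal" where
  "rel_entropy P Q =
    (if sets P = sets Q \<and> absolutely_continuous Q P then
       (let f = (\<lambda>x. ln (enn2real (RN_deriv Q P x))) in
         enn2ereal (\<integral>\<^sup>+x. ennreal (f x) \<partial>P) - enn2ereal (\<integral>\<^sup>+x. ennreal (- f x) \<partial>P))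
     else \<infinity>)"

definition rel_entropy_set :: "'z measure \<Rightarrow> 'z measure set \<Rightarrow> ereal" where
  "rel_entropy_set P Mdl = (INF Q\<in>Mdl. rel_entropy P Q)"

text \<open>Penalized criterion crit(n,K) for the sample omega (extended reals so that it is
  defined even for an empty parameter set).\<close>
definition crit :: "('t \<Rightarrow> 'z \<Rightarrow> real) \<Rightarrow> (nat \<Rightarrow> 't set) \<Rightarrow> (nat \<Rightarrow> nat \<Rightarrow> real)
    \<Rightarrow> (nat \<Rightarrow> 'w \<Rightarrow> 'z) \<Rightarrow> nat \<Rightarrow> nat \<Rightarrow> 'w \<Rightarrow> ereal" where
  "crit ell \<Theta> pen Z n K \<omega> =
     (SUP \<theta>\<in>\<Theta> K. ereal (\<Sum>i<n. ell \<theta> (Z i \<omega>))) - ereal (pen n K)"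

definition Khat_L :: "('t \<Rightarrow> 'z \<Rightarrow> real) \<Rightarrow> (nat \<Rightarrow> 't set) \<Rightarrow> (nat \<Rightarrow> nat \<Rightarrow> real)
    \<Rightarrow> (nat \<Rightarrow> 'w \<Rightarrow> 'z) \<Rightarrow> nat \<Rightarrow> 'w \<Rightarrow> enat" where
  "Khat_L ell \<Theta> pen Z n \<omega> =
     (if \<exists>K\<ge>1. crit ell \<Theta> pen Z n K \<omega> \<ge> crit ell \<Theta> pen Z n (Suc K) \<omega>
      then enat (LEAST K. K \<ge> 1 \<and> crit ell \<Theta> pen Z n K \<omega> \<ge> crit ell \<Theta> pen Z n (Suc K) \<omega>)
      else \<infinity>)"

definition Khat_G :: "('t \<Rightarrow> 'z \<Rightarrow> real) \<Rightarrow> (nat \<Rightarrow> 't set) \<Rightarrow> (nat \<Rightarrow> nat \<Rightarrow> real)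
    \<Rightarrow> (nat \<Rightarrow> 'w \<Rightarrow> 'z) \<Rightarrow> nat \<Rightarrow> 'w \<Rightarrow> enat" where
  "Khat_G ell \<Theta> pen Z n \<omega> =
     (if \<exists>K\<ge>1. \<forall>K'\<ge>1. crit ell \<Theta> pen Z n K' \<omega> \<le> crit ell \<Theta> pen Z n K \<omega>
      then enat (LEAST K. K \<ge> 1 \<and> (\<forall>K'\<ge>1. crit ell \<Theta> pen Z n K' \<omega> \<le> crit ell \<Theta> pen Z n K \<omega>))
      else \<infinity>)"

end

theory Submission
  imports Defs "HOL-Probability.Probability"
begin
lemma cesaro0:
  fixes a :: "nat \<Rightarrow> real"
  assumes "a \<longlonglongrightarrow> 0"
  shows "(\<lambda>n. (\<Sum>i<n. a i) / real n) \<longlonglongrightarrow> 0"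
proof (rule tendstoI)
  fix e :: real assume e: "e > 0"
  from assms e obtain N where N: "\<And>i. i \<ge> N \<Longrightarrow> \<bar>a i\<bar> < e/2"
    unfolding lim_sequentially by (metis dist_real_def diff_zero half_gt_zero)
  define C where "C = (\<Sum>i<N. \<bar>a i\<bar>)"
  have C0: "C \<ge> 0" unfolding C_def by (simp add: sum_nonneg)
  obtain N2 :: nat where N2: "real N2 > 2 * C / e" using reals_Archimedean2 by blast
  show "\<forall>\<^sub>F n in sequentially. dist ((\<Sum>i<n. a i) / real n) 0 < e"
    unfolding eventually_sequentially
  proof (intro exI[of _ "max (Suc N) N2"] allI impI)
    fix n assume n: "n \<ge> max (Suc N) N2"
    then have nN: "N \<le> n" and npos: "real n > 0" by auto
    have split: "{..<n} = {..<N} \<union> {N..<n}" using nN by auto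
    have "\<bar>\<Sum>i<n. a i\<bar> \<le> (\<Sum>i<n. \<bar>a i\<bar>)" by (rule sum_abs)
    also have "\<dots> = C + (\<Sum>i\<in>{N..<n}. \<bar>a i\<bar>)"
      unfolding C_def split by (subst sum.union_disjoint) auto
    also have "(\<Sum>i\<in>{N..<n}. \<bar>a i\<bar>) \<le> (\<Sum>i\<in>{N..<n}. e/2)"
      by (intro sum_mono) (metis N atLeastLessThan_iff less_imp_le)
    also have "\<dots> = real (n - N) * (e/2)" by simp
    also have "\<dots> \<le> real n * (e/2)" using e by (intro mult_right_mono) auto
    finally have 1: "\<bar>\<Sum>i<n. a i\<bar> \<le> C + real n * (e/2)" by simp
    have "real n > 2 * C / e" using n N2 by auto
    then have "C < real n * (e/2)" using e by (simp add: field_simps)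
    with 1 have "\<bar>\<Sum>i<n. a i\<bar> < real n * e" by simp
    then show "dist ((\<Sum>i<n. a i) / real n) 0 < e"
      using npos by (simp add: dist_real_def abs_div pos_divide_less_eq mult.commute)
  qed
qed

lemma cesaro:
  fixes a :: "nat \<Rightarrow> real"
  assumes "a \<longlonglongrightarrow> L"
  shows "(\<lambda>n. (\<Sum>i<n. a i) / real n) \<longlonglongrightarrow> L"
proof -
  have "(\<lambda>i. a i - L) \<longlonglongrightarrow> 0" using assms by (simp add: LIM_zero)
  then have "(\<lambda>n. (\<Sum>i<n. a i - L) / real n) \<longlonglongrightarrow> 0" by (rule cesaro0)
  then have "(\<lambda>n. (\<Sum>i<n. a i - L) / real n + L) \<longlonglongrightarrow> 0 + L" by (intro tendsto_add) auto
  moreover have "eventually (\<lambda>n. (\<Sum>i<n. a i - L) / real n + L = (\<Sum>i<n. a i) / real n) sequentially"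
    unfolding eventually_sequentially
    by (intro exI[of _ 1]) (auto simp: sum_subtractf field_simps)
  ultimately show ?thesis by (simp add: tendsto_cong)
qed

lemma count_le:
  fixes x :: real assumes "x \<ge> 0"
  shows "(\<Sum>i<N. indicator {y. real (Suc i) < y} x) \<le> min (real N) x"
proof (induction N)
  case 0 then show ?case using assms by simp
next
  case (Suc N)
  show ?case
  proof (cases "real (Suc N) < x")
    case True
    have "(\<Sum>i<Suc N. indicator {y. real (Suc i) < y} x) \<le> real N + 1"
      using Suc by (simp add: indicator_def)
    then show ?thesis using True by simp
  next
    case False
    then show ?thesis using Suc by (simp add: indicator_def)
  qed
qed

lemma geom_bound:
  fixes \<alpha> c :: real
  assumes a: "\<alpha> > 1" and c: "c > 0"
  shows "(\<Sum>m<N. if c \<le> \<alpha>^m then 1/\<alpha>^m else 0) \<le> \<alpha> / ((\<alpha> - 1) * c)"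
proof (cases "\<exists>m<N. c \<le> \<alpha>^m")
  case False
  then have "(\<Sum>m<N. if c \<le> \<alpha>^m then 1/\<alpha>^m else 0) = 0" by (intro sum.neutral) auto
  then show ?thesis using a c by simp
next
  case True
  define m0 where "m0 = (LEAST m. c \<le> \<alpha>^m)"
  have m0: "c \<le> \<alpha>^m0" using True unfolding m0_def by (metis LeastI)
  have m0N: "m0 < N" using True unfolding m0_def by (meson Least_le le_less_trans)
  have iff: "c \<le> \<alpha>^m \<longleftrightarrow> m0 \<le> m" for m
  proof
    assume "c \<le> \<alpha>^m" then show "m0 \<le> m" unfolding m0_def by (rule Least_le)
  next
    assume "m0 \<le> m" then have "\<alpha>^m0 \<le> \<alpha>^m" using a by (intro power_increasing) auto
    then show "c \<le> \<alpha>^m" using m0 by simp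
  qed
  define q where "q = 1/\<alpha>"
  have q: "0 < q" "q < 1" using a by (auto simp: q_def)
  have "(\<Sum>m<N. if c \<le> \<alpha>^m then 1/\<alpha>^m else 0) = (\<Sum>m\<in>{m0..<N}. q^m)"
    by (rule sum.mono_neutral_cong_right) (auto simp: iff q_def power_one_over)
  also have "\<dots> = (\<Sum>j<N - m0. q^(m0 + j))"
    by (rule sum.reindex_bij_witness[of _ "\<lambda>j. m0 + j" "\<lambda>m. m - m0"]) auto
  also have "\<dots> = q^m0 * (\<Sum>j<N - m0. q^j)" by (simp add: power_add sum_distrib_left)
  also have "(\<Sum>j<N - m0. q^j) \<le> 1 / (1 - q)"
    using q by (simp add: sum_gp_strict divide_right_mono)
  then have "q^m0 * (\<Sum>j<N - m0. q^j) \<le> q^m0 * (1/(1-q))" using q by (intro mult_left_mono) auto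
  also have "q^m0 = 1/\<alpha>^m0" by (simp add: q_def power_one_over)
  also have "1/\<alpha>^m0 \<le> 1/c" using m0 c by (intro divide_left_mono) auto
  then have "1/\<alpha>^m0 * (1/(1-q)) \<le> 1/c * (1/(1-q))" using q by (intro mult_right_mono) auto
  also have "1/c * (1/(1-q)) = \<alpha> / ((\<alpha> - 1) * c)" using a c by (simp add: q_def field_simps)
  finally show ?thesis by simp
qed

definition kseq :: "real \<Rightarrow> nat \<Rightarrow> nat" where
  "kseq \<alpha> m = nat \<lceil>\<alpha>^m\<rceil>"

lemma kseq_bounds:
  assumes "\<alpha> > 1"
  shows "\<alpha>^m \<le> real (kseq \<alpha> m)" "real (kseq \<alpha> m) \<le> \<alpha>^m + 1" "kseq \<alpha> m \<ge> 1"
proof -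
  have p: "\<alpha>^m \<ge> 1" using assms by simp
  have c: "1 \<le> \<lceil>\<alpha>^m\<rceil>" using p by (simp add: one_le_ceiling)
  have r: "real (kseq \<alpha> m) = real_of_int \<lceil>\<alpha>^m\<rceil>" using c by (simp add: kseq_def)
  have c1: "\<alpha>^m \<le> real_of_int \<lceil>\<alpha>^m\<rceil>" by (rule le_of_int_ceiling)
  have c2: "real_of_int \<lceil>\<alpha>^m\<rceil> < \<alpha>^m + 1" using ceiling_correct[of "\<alpha>^m"] by linarith
  show "\<alpha>^m \<le> real (kseq \<alpha> m)" using r c1 by simp
  show "real (kseq \<alpha> m) \<le> \<alpha>^m + 1" using r c2 by simp
  have "real (kseq \<alpha> m) \<ge> 1" using r c1 p by simp
  then show "kseq \<alpha> m \<ge> 1" by simp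
qed

lemma kseq_at_top:
  assumes "\<alpha> > 1"
  shows "filterlim (kseq \<alpha>) at_top sequentially"
  unfolding filterlim_at_top eventually_sequentially
proof (intro allI)
  fix Z :: nat
  obtain n where n: "real Z < \<alpha>^n" using real_arch_pow[OF assms] by blast
  show "\<exists>N. \<forall>m\<ge>N. Z \<le> kseq \<alpha> m"
  proof (intro exI allI impI)
    fix m assume "n \<le> m"
    then have "\<alpha>^n \<le> \<alpha>^m" using assms by (intro power_increasing) auto
    then have "real Z \<le> real (kseq \<alpha> m)" using n kseq_bounds(1)[OF assms, of m] by linarith
    then show "Z \<le> kseq \<alpha> m" by simp
  qed
qed

lemma kseq_ratio:
  assumes a: "\<alpha> > 1"
  shows "(\<lambda>m. real (kseq \<alpha> (Suc m)) / real (kseq \<alpha> m)) \<longlonglongrightarrow> \<alpha>"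
proof (rule tendsto_sandwich)
  have q: "(\<lambda>m. (1/\<alpha>)^m) \<longlonglongrightarrow> 0" using a by (intro LIMSEQ_realpow_zero) auto
  have "(\<lambda>m. \<alpha> / (1 + (1/\<alpha>)^m)) \<longlonglongrightarrow> \<alpha> / (1 + 0)"
    by (intro tendsto_intros q) auto
  moreover have "\<alpha> / (1 + (1/\<alpha>)^m) = \<alpha>^Suc m / (\<alpha>^m + 1)" for m
    using a by (simp add: field_simps power_one_over)
  ultimately show "(\<lambda>m. \<alpha>^Suc m / (\<alpha>^m + 1)) \<longlonglongrightarrow> \<alpha>" by simp
  have "(\<lambda>m. \<alpha> + (1/\<alpha>)^m) \<longlonglongrightarrow> \<alpha> + 0" by (intro tendsto_intros q)
  moreover have "\<alpha> + (1/\<alpha>)^m = (\<alpha>^Suc m + 1) / \<alpha>^m" for m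
    using a by (simp add: field_simps power_one_over)
  ultimately show "(\<lambda>m. (\<alpha>^Suc m + 1) / \<alpha>^m) \<longlonglongrightarrow> \<alpha>" by simp
  show "\<forall>\<^sub>F m in sequentially. \<alpha>^Suc m / (\<alpha>^m + 1) \<le> real (kseq \<alpha> (Suc m)) / real (kseq \<alpha> m)"
  proof (intro always_eventually allI)
    fix m
    have "\<alpha>^Suc m / (\<alpha>^m + 1) \<le> real (kseq \<alpha> (Suc m)) / (\<alpha>^m + 1)"
      using kseq_bounds[OF a, of "Suc m"] a by (intro divide_right_mono) auto
    also have "\<dots> \<le> real (kseq \<alpha> (Suc m)) / real (kseq \<alpha> m)"
      using kseq_bounds[OF a, of m] a by (intro divide_left_mono) auto
    finally show "\<alpha>^Suc m / (\<alpha>^m + 1) \<le> real (kseq \<alpha> (Suc m)) / real (kseq \<alpha> m)" .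
  qed
  show "\<forall>\<^sub>F m in sequentially. real (kseq \<alpha> (Suc m)) / real (kseq \<alpha> m) \<le> (\<alpha>^Suc m + 1) / \<alpha>^m"
  proof (intro always_eventually allI)
    fix m
    have "real (kseq \<alpha> (Suc m)) / real (kseq \<alpha> m) \<le> (\<alpha>^Suc m + 1) / real (kseq \<alpha> m)"
      using kseq_bounds[OF a, of "Suc m"] a by (intro divide_right_mono) auto
    also have "\<dots> \<le> (\<alpha>^Suc m + 1) / \<alpha>^m"
      using kseq_bounds[OF a, of m] a by (intro divide_left_mono) auto
    finally show "real (kseq \<alpha> (Suc m)) / real (kseq \<alpha> m) \<le> (\<alpha>^Suc m + 1) / \<alpha>^m" .
  qed
qed

lemma interp:
  fixes s :: "nat \<Rightarrow> real" and k :: "nat \<Rightarrow> nat"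
  assumes mono: "\<And>n. s n \<le> s (Suc n)" and s0: "\<And>n. 0 \<le> s n"
    and k1: "\<And>m. k m \<ge> 1" and kinf: "filterlim k at_top sequentially"
    and ratio: "(\<lambda>m. real (k (Suc m)) / real (k m)) \<longlonglongrightarrow> \<alpha>"
    and lim: "(\<lambda>m. s (k m) / real (k m)) \<longlonglongrightarrow> L" and a: "\<alpha> > 0"
    and that: "e > 0"
  shows "\<forall>\<^sub>F n in sequentially. s n / real n < \<alpha> * L + e \<and> L / \<alpha> - e < s n / real n"
proof -
  have inc: "incseq s" using mono by (rule incseq_SucI)
  have ex: "\<exists>m. n < k m" for n
  proof -
    have "eventually (\<lambda>m. Suc n \<le> k m) sequentially" using kinf by (simp add: filterlim_at_top)
    then obtain N where "\<forall>m\<ge>N. Suc n \<le> k m" unfolding eventually_sequentially by blast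
    then show ?thesis by (intro exI[of _ N]) auto
  qed
  define mm where "mm n = (LEAST m. n < k m) - 1" for n
  have mm: "k (mm n) \<le> n \<and> n < k (Suc (mm n))" if "n \<ge> k 0" for n
  proof -
    define m' where "m' = (LEAST m. n < k m)"
    have 1: "n < k m'" unfolding m'_def by (rule LeastI_ex) (rule ex)
    have "m' \<noteq> 0" proof assume "m' = 0" then show False using 1 that by simp qed
    then have 2: "Suc (mm n) = m'" unfolding mm_def m'_def by simp
    have "mm n < m'" using 2 by simp
    then have "\<not> n < k (mm n)" unfolding m'_def by (rule not_less_Least)
    with 1 2 show ?thesis by (simp add: not_less)
  qed
  have mm_top: "filterlim mm at_top sequentially"
    unfolding filterlim_at_top eventually_sequentially
  proof (intro allI)
    fix M
    define N where "N = Max (k ` {..Suc M})"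
    show "\<exists>N. \<forall>n\<ge>N. M \<le> mm n"
    proof (intro exI[of _ N] allI impI)
      fix n assume n: "N \<le> n"
      have kle: "k j \<le> n" if "j \<le> Suc M" for j
      proof -
        have "k j \<le> N" unfolding N_def using that by (intro Max_ge) auto
        then show ?thesis using n by simp
      qed
      have "n \<ge> k 0" using kle by auto
      have "n < k (Suc (mm n))" using mm[OF \<open>n \<ge> k 0\<close>] by auto
      then have "\<not> Suc (mm n) \<le> Suc M" using kle by (meson not_le)
      then show "M \<le> mm n" by simp
    qed
  qed
  have U: "(\<lambda>m. (s (k (Suc m)) / real (k (Suc m))) * (real (k (Suc m)) / real (k m))) \<longlonglongrightarrow> L * \<alpha>"
    by (intro tendsto_mult ratio LIMSEQ_Suc[OF lim])
  have V: "(\<lambda>m. (s (k m) / real (k m)) / (real (k (Suc m)) / real (k m))) \<longlonglongrightarrow> L / \<alpha>"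
    using a by (intro tendsto_divide ratio lim) auto
  have eqU: "(s (k (Suc m)) / real (k (Suc m))) * (real (k (Suc m)) / real (k m)) = s (k (Suc m)) / real (k m)" for m
  proof -
    have "real (k (Suc m)) \<noteq> 0" using k1[of "Suc m"] by auto
    then show ?thesis by simp
  qed
  have U': "(\<lambda>m. s (k (Suc m)) / real (k m)) \<longlonglongrightarrow> \<alpha> * L"
    using U unfolding eqU by (simp add: mult.commute)
  have eqV: "(s (k m) / real (k m)) / (real (k (Suc m)) / real (k m)) = s (k m) / real (k (Suc m))" for m
  proof -
    have "real (k m) \<noteq> 0" using k1[of m] by auto
    then show ?thesis by simp
  qed
  have V': "(\<lambda>m. s (k m) / real (k (Suc m))) \<longlonglongrightarrow> L / \<alpha>"
    using V unfolding eqV .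
  have U2: "eventually (\<lambda>n. s (k (Suc (mm n))) / real (k (mm n)) < \<alpha> * L + e) sequentially"
    using order_tendstoD(2)[OF filterlim_compose[OF U' mm_top], of "\<alpha> * L + e"] that by simp
  have V2: "eventually (\<lambda>n. L / \<alpha> - e < s (k (mm n)) / real (k (Suc (mm n)))) sequentially"
    using order_tendstoD(1)[OF filterlim_compose[OF V' mm_top], of "L / \<alpha> - e"] that by simp
  have B: "eventually (\<lambda>n. s n / real n \<le> s (k (Suc (mm n))) / real (k (mm n)) \<and>
      s (k (mm n)) / real (k (Suc (mm n))) \<le> s n / real n) sequentially"
    unfolding eventually_sequentially
  proof (intro exI[of _ "k 0"] allI impI conjI)
    fix n assume n: "k 0 \<le> n"
    note h = mm[OF n]
    have kpos: "real (k (mm n)) > 0" using k1[of "mm n"] by simp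
    have npos: "real n \<ge> real (k (mm n))" using h by auto
    have sn: "s n \<le> s (k (Suc (mm n)))" using h inc by (auto intro!: incseqD[OF inc])
    show "s n / real n \<le> s (k (Suc (mm n))) / real (k (mm n))"
      by (rule frac_le[OF s0 sn kpos npos])
    have sk: "s (k (mm n)) \<le> s n" using h inc by (auto intro!: incseqD[OF inc])
    have np: "0 < real n" using kpos npos by linarith
    have nk: "real n \<le> real (k (Suc (mm n)))" using h by simp
    show "s (k (mm n)) / real (k (Suc (mm n))) \<le> s n / real n"
      by (rule frac_le[OF s0 sk np nk])
  qed
  from U2 V2 B show ?thesis by eventually_elim linarith
qed

context prob_space begin

lemma var_sum_bound:
  fixes Y :: "nat \<Rightarrow> 'a \<Rightarrow> real"
  assumes meas: "\<And>i. random_variable borel (Y i)"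
    and ind: "indep_vars (\<lambda>_. borel) Y UNIV"
    and bnd: "\<And>i x. \<bar>Y i x\<bar> \<le> B i"
  shows "expectation (\<lambda>x. ((\<Sum>i<k. Y i x) - expectation (\<lambda>x. \<Sum>i<k. Y i x))^2)
           \<le> (\<Sum>i<k. expectation (\<lambda>x. (Y i x)^2))"
proof -
  have intY: "integrable M (Y i)" for i
    by (rule integrable_const_bound[where B="B i"]) (use bnd meas in auto)
  define m where "m i = expectation (Y i)" for i
  define W where "W i x = Y i x - m i" for i x
  have measW: "random_variable borel (W i)" for i unfolding W_def using meas by simp
  have bndW: "\<bar>W i x\<bar> \<le> B i + \<bar>m i\<bar>" for i x unfolding W_def using bnd[of i x] by linarith
  have Bnn: "0 \<le> B i + \<bar>m i\<bar>" for i using bndW[of i undefined] by linarith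
  have intW: "integrable M (W i)" for i
    by (rule integrable_const_bound[where B="B i + \<bar>m i\<bar>"]) (use bndW measW in auto)
  have intWW: "integrable M (\<lambda>x. W i x * W j x)" for i j
    by (rule integrable_const_bound[where B="(B i + \<bar>m i\<bar>) * (B j + \<bar>m j\<bar>)"])
       (use bndW measW Bnn in \<open>auto simp: abs_mult intro!: AE_I2 mult_mono\<close>)
  have EW: "expectation (W i) = 0" for i
    unfolding W_def m_def using intY by (simp add: prob_space)
  have indW: "indep_vars (\<lambda>_. borel) W UNIV"
    unfolding W_def[abs_def]
    by (rule indep_vars_compose2[OF ind, where Y="\<lambda>i x. x - m i"]) auto
  have cross: "expectation (\<lambda>x. W i x * W j x) = (if i = j then expectation (\<lambda>x. (W i x)^2) else 0)" for i j
  proof (cases "i = j")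
    case False
    have ij: "indep_vars (\<lambda>_. borel) W {i, j}" by (rule indep_vars_subset[OF indW]) auto
    have "expectation (\<lambda>x. \<Prod>l\<in>{i,j}. W l x) = (\<Prod>l\<in>{i,j}. expectation (W l))"
      by (rule indep_vars_lebesgue_integral[OF _ ij]) (auto intro: intW)
    then show ?thesis using False EW by simp
  qed (simp add: power2_eq_square)
  have ES: "expectation (\<lambda>x. \<Sum>i<k. Y i x) = (\<Sum>i<k. m i)"
    unfolding m_def using intY by (simp add: integral_sum)
  have eq: "((\<Sum>i<k. Y i x) - expectation (\<lambda>x. \<Sum>i<k. Y i x))^2 = (\<Sum>i<k. \<Sum>j<k. W i x * W j x)" for x
    unfolding ES W_def by (simp add: power2_eq_square sum_subtractf[symmetric] sum_product)
  have "expectation (\<lambda>x. ((\<Sum>i<k. Y i x) - expectation (\<lambda>x. \<Sum>i<k. Y i x))^2)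
      = (\<Sum>i<k. \<Sum>j<k. expectation (\<lambda>x. W i x * W j x))"
  proof -
    have "expectation (\<lambda>x. \<Sum>i<k. \<Sum>j<k. W i x * W j x) = (\<Sum>i<k. expectation (\<lambda>x. \<Sum>j<k. W i x * W j x))"
      using Bochner_Integration.integral_sum[of "{..<k}" M "\<lambda>i x. \<Sum>j<k. W i x * W j x"] intWW by (simp add: integrable_sum)
    also have "\<dots> = (\<Sum>i<k. \<Sum>j<k. expectation (\<lambda>x. W i x * W j x))"
      using Bochner_Integration.integral_sum[of "{..<k}" M "\<lambda>j x. W i x * W j x" for i] intWW by simp
    finally show ?thesis unfolding eq .
  qed
  also have "\<dots> = (\<Sum>i<k. expectation (\<lambda>x. (W i x)^2))"
    unfolding cross by (simp add: sum.delta)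
  also have "\<dots> \<le> (\<Sum>i<k. expectation (\<lambda>x. (Y i x)^2))"
  proof (rule sum_mono)
    fix i
    have intY2: "integrable M (\<lambda>x. (Y i x)^2)"
    proof (rule integrable_const_bound[where B="(B i)^2"])
      have "norm ((Y i x)^2) \<le> (B i)^2" for x
      proof -
        have "norm ((Y i x)^2) = \<bar>Y i x\<bar>^2" by simp
        also have "\<dots> \<le> (B i)^2" by (rule power_mono[OF bnd abs_ge_zero])
        finally show ?thesis .
      qed
      then show "AE x in M. norm ((Y i x)^2) \<le> (B i)^2" by simp
    qed (use meas in simp)
    have "expectation (\<lambda>x. (W i x)^2) = variance (Y i)"
      unfolding W_def m_def by simp
    also have "\<dots> = expectation (\<lambda>x. (Y i x)^2) - (expectation (Y i))^2"
      by (rule variance_eq[OF intY intY2])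
    finally show "expectation (\<lambda>x. (W i x)^2) \<le> expectation (\<lambda>x. (Y i x)^2)" by simp
  qed
  finally show ?thesis .
qed

end

locale iidnn = prob_space +
  fixes X :: "nat \<Rightarrow> 'a \<Rightarrow> real"
  assumes meas: "\<And>i. random_variable borel (X i)"
    and ind: "indep_vars (\<lambda>_. borel) X UNIV"
    and ident: "\<And>i. distr M borel (X i) = distr M borel (X 0)"
    and nn: "\<And>i x. 0 \<le> X i x"
    and int0: "integrable M (X 0)"
begin

lemma meas'[measurable]: "X i \<in> borel_measurable M" using meas by simp

lemma Eh:
  fixes h :: "real \<Rightarrow> real"
  assumes h[measurable]: "h \<in> borel_measurable borel"
  shows "expectation (\<lambda>x. h (X i x)) = expectation (\<lambda>x. h (X 0 x))"
proof -
  have "expectation (\<lambda>x. h (X i x)) = integral\<^sup>L (distr M borel (X i)) h"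
    using integral_distr[OF meas'[of i] h] by simp
  also have "\<dots> = integral\<^sup>L (distr M borel (X 0)) h" by (simp only: ident[of i])
  also have "\<dots> = expectation (\<lambda>x. h (X 0 x))" using integral_distr[OF meas'[of 0] h] by simp
  finally show ?thesis .
qed

lemma Ph:
  fixes A :: "real set"
  assumes A[measurable]: "A \<in> sets borel"
  shows "prob {x\<in>space M. X i x \<in> A} = prob {x\<in>space M. X 0 x \<in> A}"
proof -
  have se: "X j -` A \<inter> space M = {x\<in>space M. X j x \<in> A}" for j by auto
  have e1: "measure (distr M borel (X j)) A = prob {x\<in>space M. X j x \<in> A}" for j
    using measure_distr[OF meas'[of j] A] se[of j] by (simp only:)
  show ?thesis using e1[of i] e1[of 0] ident[of i] by (simp only:)
qed

lemma ev_trunc: "AE x in M. eventually (\<lambda>n. X n x \<le> real (Suc n)) sequentially"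
proof -
  define A where "A n = {x\<in>space M. X n x \<in> {real (Suc n)<..}}" for n
  have Ameas: "A n \<in> sets M" for n unfolding A_def by measurable
  have PA: "measure M (A n) = expectation (\<lambda>x. indicator {real (Suc n)<..} (X 0 x))" for n
  proof -
    have "measure M (A n) = prob {x\<in>space M. X 0 x \<in> {real (Suc n)<..}}"
      unfolding A_def by (rule Ph) simp
    also have "\<dots> = expectation (\<lambda>x. indicator {x\<in>space M. X 0 x \<in> {real (Suc n)<..}} x)"
    proof -
      have "{x\<in>space M. X 0 x \<in> {real (Suc n)<..}} \<inter> space M = {x\<in>space M. X 0 x \<in> {real (Suc n)<..}}" by auto
      then show ?thesis by (simp add: Bochner_Integration.integral_indicator)
    qed
    also have "\<dots> = expectation (\<lambda>x. indicator {real (Suc n)<..} (X 0 x))"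
      by (rule Bochner_Integration.integral_cong) (auto simp: indicator_def)
    finally show ?thesis .
  qed
  have sumA: "summable (\<lambda>n. measure M (A n))"
  proof (rule summableI_nonneg_bounded)
    fix N
    have "(\<Sum>n<N. measure M (A n)) = expectation (\<lambda>x. \<Sum>n<N. indicator {real (Suc n)<..} (X 0 x))"
      unfolding PA by (rule Bochner_Integration.integral_sum[symmetric])
         (auto intro!: integrable_const_bound[where B=1])
    also have "\<dots> \<le> expectation (X 0)"
    proof (rule integral_mono)
      show "integrable M (\<lambda>x. \<Sum>n<N. indicator {real (Suc n)<..} (X 0 x) :: real)"
        by (intro Bochner_Integration.integrable_sum) (auto intro!: integrable_const_bound[where B=1])
      show "integrable M (X 0)" by (rule int0)
      fix x
      have "(\<Sum>n<N. indicator {real (Suc n)<..} (X 0 x) :: real) = (\<Sum>i<N. indicator {y. real (Suc i) < y} (X 0 x))"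
        by (intro sum.cong) (auto simp: indicator_def)
      also have "\<dots> \<le> min (real N) (X 0 x)" by (rule count_le[OF nn])
      also have "\<dots> \<le> X 0 x" by simp
      finally show "(\<Sum>n<N. indicator {real (Suc n)<..} (X 0 x) :: real) \<le> X 0 x" .
    qed
    finally show "(\<Sum>n<N. measure M (A n)) \<le> expectation (X 0)" .
  qed simp
  have "AE x in M. eventually (\<lambda>n. x \<in> space M - A n) sequentially"
    by (rule borel_cantelli_AE1[OF Ameas _ sumA]) (simp add: emeasure_eq_measure)
  then show ?thesis
    by eventually_elim (auto elim!: eventually_mono simp: A_def not_less)
qed

end

definition gtr :: "nat \<Rightarrow> real \<Rightarrow> real" where
  "gtr k y = (if 0 \<le> y \<and> y \<le> real k then y^2 else 0)"

lemma gtr_sum_bound: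
  assumes a: "\<alpha> > 1" and y: "y \<ge> 0"
  shows "(\<Sum>m<N. gtr (kseq \<alpha> m) y / real (kseq \<alpha> m)) \<le> 2 * \<alpha> / (\<alpha> - 1) * y"
proof (cases "y = 0")
  case True then show ?thesis by (simp add: gtr_def)
next
  case False
  with y have yp: "y > 0" by simp
  have trm: "gtr (kseq \<alpha> m) y / real (kseq \<alpha> m) \<le> y^2 * (if y/2 \<le> \<alpha>^m then 1/\<alpha>^m else 0)" for m
  proof (cases "y \<le> real (kseq \<alpha> m)")
    case True
    note kb = kseq_bounds[OF a, of m]
    have am: "\<alpha>^m \<ge> 1" using a by simp
    have c: "y/2 \<le> \<alpha>^m" using True kb am by linarith
    have "gtr (kseq \<alpha> m) y / real (kseq \<alpha> m) = y^2 / real (kseq \<alpha> m)" using True y by (simp add: gtr_def)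
    also have "\<dots> \<le> y^2 / \<alpha>^m" using kb am by (intro divide_left_mono) auto
    also have "\<dots> = y^2 * (if y/2 \<le> \<alpha>^m then 1/\<alpha>^m else 0)" using c by simp
    finally show ?thesis .
  next
    case False
    then show ?thesis using y by (simp add: gtr_def)
  qed
  have "(\<Sum>m<N. gtr (kseq \<alpha> m) y / real (kseq \<alpha> m)) \<le> (\<Sum>m<N. y^2 * (if y/2 \<le> \<alpha>^m then 1/\<alpha>^m else 0))"
    by (intro sum_mono trm)
  also have "\<dots> = y^2 * (\<Sum>m<N. if y/2 \<le> \<alpha>^m then 1/\<alpha>^m else 0)" by (simp add: sum_distrib_left)
  also have "\<dots> \<le> y^2 * (\<alpha> / ((\<alpha> - 1) * (y/2)))"
    by (intro mult_left_mono geom_bound a) (use yp in auto)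
  also have "\<dots> = 2 * \<alpha> / (\<alpha> - 1) * y" using yp a by (simp add: field_simps power2_eq_square)
  finally show ?thesis .
qed

context iidnn begin

definition Y :: "nat \<Rightarrow> 'a \<Rightarrow> real" where
  "Y i x = (if X i x \<le> real (Suc i) then X i x else 0)"

definition T :: "nat \<Rightarrow> 'a \<Rightarrow> real" where
  "T n x = (\<Sum>i<n. Y i x)"

lemma Y_meas[measurable]: "Y i \<in> borel_measurable M"
  unfolding Y_def by measurable

lemma T_meas[measurable]: "T n \<in> borel_measurable M"
  unfolding T_def by measurable

lemma Y_bnd: "0 \<le> Y i x" "Y i x \<le> real (Suc i)"
  unfolding Y_def using nn[of i x] by auto

lemma Y_ind: "indep_vars (\<lambda>_. borel) Y UNIV"
proof -
  have "indep_vars (\<lambda>_. borel) (\<lambda>i x. (\<lambda>y. if y \<le> real (Suc i) then y else 0) (X i x)) UNIV"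
    by (rule indep_vars_compose2[OF ind]) measurable
  then show ?thesis unfolding Y_def[abs_def] .
qed

lemma prob_bound:
  assumes e: "e > 0" and k: "k \<ge> 1"
  shows "prob {x\<in>space M. e * real k \<le> \<bar>T k x - expectation (T k)\<bar>}
          \<le> expectation (\<lambda>x. gtr k (X 0 x)) / (e^2 * real k)"
proof -
  have Tb: "\<bar>T k x\<bar> \<le> real k * real k" for x
  proof -
    have "T k x \<le> (\<Sum>i<k. real k)" unfolding T_def
      by (intro sum_mono) (metis Y_bnd(2) Suc_leI lessThan_iff of_nat_le_iff order_trans)
    moreover have "0 \<le> T k x" unfolding T_def by (intro sum_nonneg) (simp add: Y_bnd)
    ultimately show ?thesis by simp
  qed
  have intT2: "integrable M (\<lambda>x. (T k x)^2)"
  proof (rule integrable_const_bound[where B="(real k * real k)^2"])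
    have "norm ((T k x)^2) \<le> (real k * real k)^2" for x
    proof -
      have "norm ((T k x)^2) = \<bar>T k x\<bar>^2" by simp
      also have "\<dots> \<le> (real k * real k)^2" by (rule power_mono[OF Tb abs_ge_zero])
      finally show ?thesis .
    qed
    then show "AE x in M. norm ((T k x)^2) \<le> (real k * real k)^2" by simp
  qed simp
  have ek: "e * real k > 0" using e k by simp
  have "prob {x\<in>space M. e * real k \<le> \<bar>T k x - expectation (T k)\<bar>} \<le> variance (T k) / (e * real k)^2"
    using Chebyshev_inequality[OF T_meas intT2 ek] by simp
  also have "variance (T k) \<le> (\<Sum>i<k. expectation (\<lambda>x. (Y i x)^2))"
    using var_sum_bound[OF _ Y_ind, of "\<lambda>i. real (Suc i)" k] Y_bnd unfolding T_def[abs_def]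
    by simp
  also have "\<dots> \<le> (\<Sum>i<k. expectation (\<lambda>x. gtr k (X 0 x)))"
  proof (rule sum_mono)
    fix i assume i: "i \<in> {..<k}"
    define tr where "tr y = (if y \<le> real (Suc i) then y else 0)^2" for y
    have "expectation (\<lambda>x. (Y i x)^2) = expectation (\<lambda>x. tr (X i x))"
      unfolding Y_def tr_def by simp
    also have "\<dots> = expectation (\<lambda>x. tr (X 0 x))"
      by (rule Eh) (unfold tr_def, measurable)
    also have "\<dots> \<le> expectation (\<lambda>x. gtr k (X 0 x))"
    proof (rule integral_mono)
      show "integrable M (\<lambda>x. tr (X 0 x))"
        by (rule integrable_const_bound[where B="(real (Suc i))^2"])
           (use nn in \<open>auto simp: tr_def intro!: power_mono\<close>)
      show "integrable M (\<lambda>x. gtr k (X 0 x))"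
        by (rule integrable_const_bound[where B="(real k)^2"])
           (use nn in \<open>auto simp: gtr_def intro!: power_mono\<close>)
      fix x
      have "real (Suc i) \<le> real k" using i by simp
      then show "tr (X 0 x) \<le> gtr k (X 0 x)" using nn[of 0 x] by (auto simp: tr_def gtr_def)
    qed
    finally show "expectation (\<lambda>x. (Y i x)^2) \<le> expectation (\<lambda>x. gtr k (X 0 x))" .
  qed
  also have "\<dots> = real k * expectation (\<lambda>x. gtr k (X 0 x))" by simp
  finally have "prob {x\<in>space M. e * real k \<le> \<bar>T k x - expectation (T k)\<bar>}
      \<le> real k * expectation (\<lambda>x. gtr k (X 0 x)) / (e * real k)^2"
    using ek by (simp add: divide_right_mono)
  also have "\<dots> = expectation (\<lambda>x. gtr k (X 0 x)) / (e^2 * real k)"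
    using ek by (simp add: power2_eq_square field_simps)
  finally show ?thesis .
qed

end

context iidnn begin

lemma sub_conv:
  assumes a: "\<alpha> > 1"
  shows "AE x in M. (\<lambda>m. (T (kseq \<alpha> m) x - expectation (T (kseq \<alpha> m))) / real (kseq \<alpha> m)) \<longlonglongrightarrow> 0"
proof -
  define k where "k = kseq \<alpha>"
  have k1: "k m \<ge> 1" for m unfolding k_def by (rule kseq_bounds(3)[OF a])
  define C where "C = 2 * \<alpha> / (\<alpha> - 1)"
  have C0: "C \<ge> 0" unfolding C_def using a by simp
  have ev: "AE x in M. eventually (\<lambda>m. \<bar>T (k m) x - expectation (T (k m))\<bar> < e * real (k m)) sequentially"
    if e: "e > 0" for e
  proof -
    define B where "B m = {x\<in>space M. e * real (k m) \<le> \<bar>T (k m) x - expectation (T (k m))\<bar>}" for m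
    have Bm: "B m \<in> sets M" for m unfolding B_def by measurable
    define c where "c m = expectation (\<lambda>x. gtr (k m) (X 0 x)) / (e^2 * real (k m))" for m
    have intg: "integrable M (\<lambda>x. gtr K (X 0 x))" for K
      by (rule integrable_const_bound[where B="(real K)^2"])
         (use nn in \<open>auto simp: gtr_def intro!: power_mono\<close>)
    have c0: "0 \<le> c m" for m
      unfolding c_def by (intro divide_nonneg_nonneg integral_nonneg) (auto simp: gtr_def)
    have sc: "summable c"
    proof (rule summableI_nonneg_bounded[OF c0])
      fix N
      have "(\<Sum>m<N. c m) = expectation (\<lambda>x. \<Sum>m<N. gtr (k m) (X 0 x) / (e^2 * real (k m)))"
        unfolding c_def
        by (subst Bochner_Integration.integral_sum) (auto intro!: intg)
      also have "\<dots> \<le> expectation (\<lambda>x. C * X 0 x / e^2)"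
      proof (rule integral_mono)
        show "integrable M (\<lambda>x. \<Sum>m<N. gtr (k m) (X 0 x) / (e^2 * real (k m)))"
          by (intro Bochner_Integration.integrable_sum integrable_divide_zero intg)
        show "integrable M (\<lambda>x. C * X 0 x / e^2)" using int0 by simp
        fix x
        have "(\<Sum>m<N. gtr (k m) (X 0 x) / (e^2 * real (k m))) = (\<Sum>m<N. gtr (k m) (X 0 x) / real (k m)) / e^2"
          by (simp add: sum_divide_distrib field_simps)
        also have "\<dots> \<le> C * X 0 x / e^2"
          unfolding C_def k_def using gtr_sum_bound[OF a nn[of 0 x], of N]
          by (intro divide_right_mono) auto
        finally show "(\<Sum>m<N. gtr (k m) (X 0 x) / (e^2 * real (k m))) \<le> C * X 0 x / e^2" .
      qed
      finally show "(\<Sum>m<N. c m) \<le> expectation (\<lambda>x. C * X 0 x / e^2)" .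
    qed
    have sB: "summable (\<lambda>m. measure M (B m))"
    proof (rule summable_comparison_test'[OF sc])
      fix m
      have "measure M (B m) \<le> c m" unfolding B_def c_def by (rule prob_bound[OF e k1])
      then show "norm (measure M (B m)) \<le> c m" by simp
    qed
    have "AE x in M. eventually (\<lambda>m. x \<in> space M - B m) sequentially"
      by (rule borel_cantelli_AE1[OF Bm _ sB]) (simp add: emeasure_eq_measure)
    then show ?thesis
      by eventually_elim (auto elim!: eventually_mono simp: B_def not_le)
  qed
  have "AE x in M. \<forall>j. eventually (\<lambda>m. \<bar>T (k m) x - expectation (T (k m))\<bar> < (1 / real (Suc j)) * real (k m)) sequentially"
    unfolding AE_all_countable by (intro allI ev) simp
  then show ?thesis
  proof eventually_elim
    case (elim x)
    show ?case unfolding k_def[symmetric]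
    proof (rule tendstoI)
      fix r :: real assume r: "r > 0"
      obtain j where j: "1 / real (Suc j) < r"
        using r by (metis nat_approx_posE)
      show "\<forall>\<^sub>F m in sequentially. dist ((T (k m) x - expectation (T (k m))) / real (k m)) 0 < r"
        using elim[rule_format, of j]
      proof eventually_elim
        case (elim m)
        have kp: "real (k m) > 0" using k1[of m] by simp
        have "\<bar>(T (k m) x - expectation (T (k m))) / real (k m)\<bar> < 1 / real (Suc j)"
          using elim kp by (simp add: abs_div pos_divide_less_eq)
        then show ?case using j by (simp add: dist_real_def)
      qed
    qed
  qed
qed

end

context iidnn begin

lemma intY: "integrable M (Y i)"
  by (rule integrable_const_bound[where B="real (Suc i)"]) (use Y_bnd in auto)

lemma ET_conv: "(\<lambda>n. expectation (T n) / real n) \<longlonglongrightarrow> expectation (X 0)"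
proof -
  define tr where "tr i y = (if y \<le> real (Suc i) then y else 0)" for i y
  have EY: "expectation (Y i) = expectation (\<lambda>x. tr i (X 0 x))" for i
  proof -
    have "expectation (Y i) = expectation (\<lambda>x. tr i (X i x))"
      unfolding Y_def tr_def by simp
    also have "\<dots> = expectation (\<lambda>x. tr i (X 0 x))"
      by (rule Eh) (unfold tr_def, measurable)
    finally show ?thesis .
  qed
  have lim: "(\<lambda>i. expectation (\<lambda>x. tr i (X 0 x))) \<longlonglongrightarrow> expectation (X 0)"
  proof (rule integral_dominated_convergence[where w="X 0"])
    show "X 0 \<in> borel_measurable M" by simp
    show "(\<lambda>x. tr i (X 0 x)) \<in> borel_measurable M" for i unfolding tr_def by measurable
    show "integrable M (X 0)" by (rule int0)
    show "AE x in M. (\<lambda>i. tr i (X 0 x)) \<longlonglongrightarrow> X 0 x"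
    proof (intro AE_I2 tendsto_eventually)
      fix x
      obtain n :: nat where "X 0 x \<le> real n" using real_arch_simple by blast
      then show "\<forall>\<^sub>F i in sequentially. tr i (X 0 x) = X 0 x"
        unfolding eventually_sequentially tr_def by (intro exI[of _ n]) auto
    qed
    show "AE x in M. norm (tr i (X 0 x)) \<le> X 0 x" for i
      using nn by (auto simp: tr_def)
  qed
  have "(\<lambda>n. (\<Sum>i<n. expectation (Y i)) / real n) \<longlonglongrightarrow> expectation (X 0)"
    unfolding EY by (rule cesaro[OF lim])
  moreover have "expectation (T n) = (\<Sum>i<n. expectation (Y i))" for n
    unfolding T_def[abs_def] by (rule Bochner_Integration.integral_sum) (rule intY)
  ultimately show ?thesis by simp
qed

definition S :: "nat \<Rightarrow> 'a \<Rightarrow> real" where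
  "S n x = (\<Sum>i<n. X i x)"

lemma Sk_conv:
  assumes a: "\<alpha> > 1"
  shows "AE x in M. (\<lambda>m. S (kseq \<alpha> m) x / real (kseq \<alpha> m)) \<longlonglongrightarrow> expectation (X 0)"
  using ev_trunc sub_conv[OF a]
proof eventually_elim
  case (elim x)
  define k where "k = kseq \<alpha>"
  have kinf: "filterlim k at_top sequentially" unfolding k_def by (rule kseq_at_top[OF a])
  have k1: "k m \<ge> 1" for m unfolding k_def by (rule kseq_bounds(3)[OF a])
  obtain N0 where N0: "\<And>n. n \<ge> N0 \<Longrightarrow> X n x \<le> real (Suc n)"
    using elim(1) unfolding eventually_sequentially by blast
  define c where "c = (\<Sum>i<N0. X i x - Y i x)"
  have diff: "S n x - T n x = c" if "n \<ge> N0" for n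
  proof -
    have "S n x - T n x = (\<Sum>i<n. X i x - Y i x)" unfolding S_def T_def by (simp add: sum_subtractf)
    also have "\<dots> = (\<Sum>i<N0. X i x - Y i x) + (\<Sum>i\<in>{N0..<n}. X i x - Y i x)"
    proof -
      have "{..<n} = {..<N0} \<union> {N0..<n}" using that by auto
      then have "(\<Sum>i<n. X i x - Y i x) = (\<Sum>i\<in>{..<N0} \<union> {N0..<n}. X i x - Y i x)" by simp
      also have "\<dots> = (\<Sum>i<N0. X i x - Y i x) + (\<Sum>i\<in>{N0..<n}. X i x - Y i x)"
        by (rule sum.union_disjoint) auto
      finally show ?thesis .
    qed
    also have "(\<Sum>i\<in>{N0..<n}. X i x - Y i x) = 0"
    proof (intro sum.neutral ballI)
      fix i assume "i \<in> {N0..<n}"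
      then have "X i x \<le> real (Suc i)" by (intro N0) auto
      then show "X i x - Y i x = 0" by (simp add: Y_def)
    qed
    finally show ?thesis unfolding c_def by simp
  qed
  have D: "(\<lambda>n. (S n x - T n x) / real n) \<longlonglongrightarrow> 0"
  proof -
    have "(\<lambda>n. c / real n) \<longlonglongrightarrow> 0" by (rule lim_const_over_n)
    moreover have "eventually (\<lambda>n. c / real n = (S n x - T n x) / real n) sequentially"
      unfolding eventually_sequentially by (intro exI[of _ N0]) (simp add: diff)
    ultimately show ?thesis by (rule Lim_transform_eventually)
  qed
  have D': "(\<lambda>m. (S (k m) x - T (k m) x) / real (k m)) \<longlonglongrightarrow> 0"
    using filterlim_compose[OF D kinf] by simp
  have E': "(\<lambda>m. expectation (T (k m)) / real (k m)) \<longlonglongrightarrow> expectation (X 0)"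
    using filterlim_compose[OF ET_conv kinf] by simp
  have sub: "(\<lambda>m. (T (k m) x - expectation (T (k m))) / real (k m)) \<longlonglongrightarrow> 0"
    using elim(2) unfolding k_def .
  have "(\<lambda>m. (S (k m) x - T (k m) x) / real (k m) + (T (k m) x - expectation (T (k m))) / real (k m)
      + expectation (T (k m)) / real (k m)) \<longlonglongrightarrow> 0 + 0 + expectation (X 0)"
    by (intro tendsto_add D' sub E')
  moreover have "(S (k m) x - T (k m) x) / real (k m) + (T (k m) x - expectation (T (k m))) / real (k m)
      + expectation (T (k m)) / real (k m) = S (k m) x / real (k m)" for m
    by (simp add: field_simps add_divide_distrib[symmetric] diff_divide_distrib[symmetric])
  ultimately show ?case unfolding k_def by simp
qed

lemma slln:
  "AE x in M. (\<lambda>n. S n x / real n) \<longlonglongrightarrow> expectation (X 0)"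
proof -
  define \<mu> where "\<mu> = expectation (X 0)"
  have mu0: "\<mu> \<ge> 0" unfolding \<mu>_def using nn by (simp add: integral_nonneg)
  define al where "al j = 1 + 1 / real (Suc j)" for j
  have al1: "al j > 1" for j unfolding al_def by simp
  have "AE x in M. \<forall>j. (\<lambda>m. S (kseq (al j) m) x / real (kseq (al j) m)) \<longlonglongrightarrow> \<mu>"
    unfolding AE_all_countable \<mu>_def using Sk_conv[OF al1] by blast
  then show ?thesis
  proof eventually_elim
    case (elim x)
    have bnds: "\<forall>\<^sub>F n in sequentially. S n x / real n < al j * \<mu> + e \<and> \<mu> / al j - e < S n x / real n"
      if "e > 0" for j e
    proof (rule interp[where k="kseq (al j)"])
      show "S n x \<le> S (Suc n) x" for n unfolding S_def using nn by simp
      show "0 \<le> S n x" for n unfolding S_def using nn by (simp add: sum_nonneg)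
      show "kseq (al j) m \<ge> 1" for m by (rule kseq_bounds(3)[OF al1])
      show "filterlim (kseq (al j)) at_top sequentially" by (rule kseq_at_top[OF al1])
      show "(\<lambda>m. real (kseq (al j) (Suc m)) / real (kseq (al j) m)) \<longlonglongrightarrow> al j" by (rule kseq_ratio[OF al1])
      show "(\<lambda>m. S (kseq (al j) m) x / real (kseq (al j) m)) \<longlonglongrightarrow> \<mu>" using elim by blast
      show "al j > 0" using al1[of j] by simp
      show "e > 0" by (rule that)
    qed
    show ?case unfolding \<mu>_def[symmetric]
    proof (rule tendstoI)
      fix r :: real assume r: "r > 0"
      obtain j :: nat where j: "real j > 2 * \<mu> / r" using reals_Archimedean2 by blast
      have jr: "\<mu> / real (Suc j) < r / 2"
      proof -
        have "2 * \<mu> < r * real j" using j r by (simp add: field_simps)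
        then have "2 * \<mu> < r * real (Suc j)" using r by (smt (verit) mult_left_mono of_nat_Suc)
        then show ?thesis by (simp add: field_simps)
      qed
      have up: "al j * \<mu> = \<mu> + \<mu> / real (Suc j)" unfolding al_def by (simp add: field_simps)
      have lo: "\<mu> / al j \<ge> \<mu> - \<mu> / real (Suc j)"
      proof -
        have "\<mu> / al j = \<mu> * real (Suc j) / real (Suc (Suc j))" unfolding al_def by (simp add: field_simps)
        also have "\<dots> = \<mu> - \<mu> / real (Suc (Suc j))" by (simp add: field_simps)
        also have "\<mu> / real (Suc (Suc j)) \<le> \<mu> / real (Suc j)" using mu0 by (intro divide_left_mono) auto
        then have "\<mu> - \<mu> / real (Suc (Suc j)) \<ge> \<mu> - \<mu> / real (Suc j)" by simp
        finally show ?thesis .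
      qed
      have r2: "r / 2 > 0" using r by simp
      show "\<forall>\<^sub>F n in sequentially. dist (S n x / real n) \<mu> < r"
        using bnds[OF r2, of j]
      proof eventually_elim
        case (elim n)
        then show ?case unfolding dist_real_def abs_less_iff using up lo jr by linarith
      qed
    qed
  qed
qed

end

lemma (in prob_space) slln_nonneg_fun:
  fixes Z :: "nat \<Rightarrow> 'a \<Rightarrow> 'z" and h :: "'z \<Rightarrow> real"
  assumes Zm: "\<And>i. Z i \<in> measurable M N"
    and indZ: "indep_vars (\<lambda>_. N) Z UNIV"
    and idZ: "\<And>i. distr M N (Z i) = P"
    and hm: "h \<in> borel_measurable N" and hint: "integrable P h" and hnn: "\<And>z. 0 \<le> h z"
  shows "AE \<omega> in M. (\<lambda>n. (\<Sum>i<n. h (Z i \<omega>)) / real n) \<longlonglongrightarrow> integral\<^sup>L P h"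
proof -
  define X where "X i \<omega> = h (Z i \<omega>)" for i \<omega>
  have Xm: "random_variable borel (X i)" for i unfolding X_def using Zm hm by measurable
  have dX: "distr M borel (X i) = distr P borel h" for i
  proof -
    have "distr M borel (X i) = distr (distr M N (Z i)) borel h"
      by (subst distr_distr[OF hm Zm]) (simp add: X_def[abs_def] comp_def)
    then show ?thesis by (simp add: idZ)
  qed
  have int0: "integrable M (X 0)"
  proof -
    have "integrable (distr M N (Z 0)) h" using hint by (simp add: idZ)
    then show ?thesis unfolding X_def using integrable_distr_eq[OF Zm hm] by simp
  qed
  have EX: "expectation (X 0) = integral\<^sup>L P h"
    using integral_distr[OF Zm[of 0] hm] unfolding X_def by (simp add: idZ)
  interpret p: iidnn M X
  proof
    show "random_variable borel (X i)" for i by (rule Xm)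
    show "indep_vars (\<lambda>_. borel) X UNIV" unfolding X_def
      by (rule indep_vars_compose2[OF indZ]) (use hm in simp)
    show "distr M borel (X i) = distr M borel (X 0)" for i by (simp only: dX)
    show "0 \<le> X i x" for i x unfolding X_def by (rule hnn)
    show "integrable M (X 0)" by (rule int0)
  qed
  show ?thesis using p.slln unfolding p.S_def EX X_def by simp
qed

lemma (in prob_space) slln_fun:
  fixes Z :: "nat \<Rightarrow> 'a \<Rightarrow> 'z" and g :: "'z \<Rightarrow> real"
  assumes Zm: "\<And>i. Z i \<in> measurable M N"
    and indZ: "indep_vars (\<lambda>_. N) Z UNIV"
    and idZ: "\<And>i. distr M N (Z i) = P"
    and gm: "g \<in> borel_measurable N" and gint: "integrable P g"
  shows "AE \<omega> in M. (\<lambda>n. (\<Sum>i<n. g (Z i \<omega>)) / real n) \<longlonglongrightarrow> integral\<^sup>L P g"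
proof -
  have A: "AE \<omega> in M. (\<lambda>n. (\<Sum>i<n. max 0 (g (Z i \<omega>))) / real n) \<longlonglongrightarrow> integral\<^sup>L P (\<lambda>z. max 0 (g z))"
    by (rule slln_nonneg_fun[OF Zm indZ idZ]) (use gm gint in auto)
  have B: "AE \<omega> in M. (\<lambda>n. (\<Sum>i<n. max 0 (- g (Z i \<omega>))) / real n) \<longlonglongrightarrow> integral\<^sup>L P (\<lambda>z. max 0 (- g z))"
    by (rule slln_nonneg_fun[OF Zm indZ idZ]) (use gm gint in auto)
  have I: "integral\<^sup>L P g = integral\<^sup>L P (\<lambda>z. max 0 (g z)) - integral\<^sup>L P (\<lambda>z. max 0 (- g z))"
  proof -
    have "integral\<^sup>L P g = integral\<^sup>L P (\<lambda>z. max 0 (g z) - max 0 (- g z))"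
      by (rule Bochner_Integration.integral_cong) auto
    also have "\<dots> = integral\<^sup>L P (\<lambda>z. max 0 (g z)) - integral\<^sup>L P (\<lambda>z. max 0 (- g z))"
      by (rule Bochner_Integration.integral_diff) (use gint in auto)
    finally show ?thesis .
  qed
  from A B show ?thesis
  proof eventually_elim
    case (elim \<omega>)
    have "(\<lambda>n. (\<Sum>i<n. max 0 (g (Z i \<omega>))) / real n - (\<Sum>i<n. max 0 (- g (Z i \<omega>))) / real n)
        \<longlonglongrightarrow> integral\<^sup>L P (\<lambda>z. max 0 (g z)) - integral\<^sup>L P (\<lambda>z. max 0 (- g z))"
      by (intro tendsto_diff elim)
    moreover have "(\<Sum>i<n. max 0 (g (Z i \<omega>))) / real n - (\<Sum>i<n. max 0 (- g (Z i \<omega>))) / real n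
        = (\<Sum>i<n. g (Z i \<omega>)) / real n" for n
    proof -
      have "(\<Sum>i<n. max 0 (g (Z i \<omega>))) - (\<Sum>i<n. max 0 (- g (Z i \<omega>))) = (\<Sum>i<n. g (Z i \<omega>))"
        by (simp add: sum_subtractf[symmetric]) (intro sum.cong; auto)
      then show ?thesis by (simp add: diff_divide_distrib[symmetric])
    qed
    ultimately show ?case unfolding I by simp
  qed
qed

lemma ereal_integral_split:
  fixes f :: "'a \<Rightarrow> real"
  assumes "integrable P f"
  shows "enn2ereal (\<integral>\<^sup>+x. ennreal (f x) \<partial>P) - enn2ereal (\<integral>\<^sup>+x. ennreal (- f x) \<partial>P) = ereal (integral\<^sup>L P f)"
proof -
  define a where "a = (\<integral>\<^sup>+x. ennreal (f x) \<partial>P)"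
  define b where "b = (\<integral>\<^sup>+x. ennreal (- f x) \<partial>P)"
  have fa: "a \<noteq> \<infinity>" "b \<noteq> \<infinity>" using assms unfolding real_integrable_def a_def b_def by auto
  have ea: "enn2ereal a = ereal (enn2real a)"
    using fa(1) by (metis enn2real_nonneg enn2ereal_ennreal ennreal_enn2real infinity_ennreal_def top.not_eq_extremum)
  have eb: "enn2ereal b = ereal (enn2real b)"
    using fa(2) by (metis enn2real_nonneg enn2ereal_ennreal ennreal_enn2real infinity_ennreal_def top.not_eq_extremum)
  have "integral\<^sup>L P f = enn2real a - enn2real b"
    unfolding a_def b_def by (rule real_lebesgue_integral_def[OF assms])
  then show ?thesis unfolding a_def[symmetric] b_def[symmetric] ea eb by simp
qed

lemma rel_entropy_self:
  assumes "prob_space P"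
  shows "rel_entropy P P = 0"
proof -
  interpret prob_space P by fact
  have ac: "absolutely_continuous P P" unfolding absolutely_continuous_def by simp
  have "AE x in P. 1 = RN_deriv P P x"
    by (rule RN_deriv_unique) (auto simp: density_1)
  then have ae: "AE x in P. ln (enn2real (RN_deriv P P x)) = 0"
    by eventually_elim (metis enn2real_1 ln_one)
  have "(\<integral>\<^sup>+x. ennreal (ln (enn2real (RN_deriv P P x))) \<partial>P) = (\<integral>\<^sup>+x. 0 \<partial>P)"
    by (rule nn_integral_cong_AE) (use ae in eventually_elim, simp)
  moreover have "(\<integral>\<^sup>+x. ennreal (- ln (enn2real (RN_deriv P P x))) \<partial>P) = (\<integral>\<^sup>+x. 0 \<partial>P)"
    by (rule nn_integral_cong_AE) (use ae in eventually_elim, simp)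
  ultimately show ?thesis unfolding rel_entropy_def using ac by (simp add: Let_def)
qed

lemma rel_entropy_dens:
  fixes \<mu> :: "'z measure" and f g :: "'z \<Rightarrow> real"
  assumes fm: "f \<in> borel_measurable \<mu>" and gm: "g \<in> borel_measurable \<mu>"
    and pf: "prob_space (density \<mu> (\<lambda>z. ennreal (exp (f z))))"
    and int: "integrable (density \<mu> (\<lambda>z. ennreal (exp (g z)))) (\<lambda>z. g z - f z)"
  shows "rel_entropy (density \<mu> (\<lambda>z. ennreal (exp (g z)))) (density \<mu> (\<lambda>z. ennreal (exp (f z))))
       = ereal (\<integral>z. g z - f z \<partial>density \<mu> (\<lambda>z. ennreal (exp (g z))))"
proof -
  define Pf where "Pf = density \<mu> (\<lambda>z. ennreal (exp (f z)))"
  define Pg where "Pg = density \<mu> (\<lambda>z. ennreal (exp (g z)))"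
  define h where "h z = ennreal (exp (g z - f z))" for z
  have hmu: "h \<in> borel_measurable \<mu>" unfolding h_def using fm gm by simp
  have hm: "h \<in> borel_measurable Pf" unfolding h_def Pf_def using fm gm by simp
  have eq: "Pg = density Pf h"
  proof -
    have "density Pf h = density \<mu> (\<lambda>z. ennreal (exp (f z)) * h z)"
      unfolding Pf_def by (rule density_density_eq) (use fm hmu in auto)
    also have "(\<lambda>z. ennreal (exp (f z)) * h z) = (\<lambda>z. ennreal (exp (g z)))"
      by (auto simp: h_def ennreal_mult[symmetric] exp_add[symmetric])
    finally show ?thesis unfolding Pg_def by simp
  qed
  have sets: "sets Pg = sets Pf" unfolding Pg_def Pf_def by simp
  have ac: "absolutely_continuous Pf Pg" unfolding eq by (rule absolutely_continuousI_density[OF hm])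
  interpret Pf: prob_space Pf unfolding Pf_def by (rule pf)
  have "AE x in Pf. h x = RN_deriv Pf Pg x"
    by (rule Pf.RN_deriv_unique[OF hm eq[symmetric]])
  then have "AE x in Pg. h x = RN_deriv Pf Pg x"
    unfolding eq using hm by (subst AE_density) (auto elim: AE_mp)
  then have ae: "AE x in Pg. ln (enn2real (RN_deriv Pf Pg x)) = g x - f x"
  proof eventually_elim
    case (elim x)
    then have "RN_deriv Pf Pg x = ennreal (exp (g x - f x))" by (simp add: h_def)
    then show ?case by simp
  qed
  have n1: "(\<integral>\<^sup>+x. ennreal (ln (enn2real (RN_deriv Pf Pg x))) \<partial>Pg) = (\<integral>\<^sup>+x. ennreal (g x - f x) \<partial>Pg)"
    by (rule nn_integral_cong_AE) (use ae in eventually_elim, simp)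
  have n2: "(\<integral>\<^sup>+x. ennreal (- ln (enn2real (RN_deriv Pf Pg x))) \<partial>Pg) = (\<integral>\<^sup>+x. ennreal (- (g x - f x)) \<partial>Pg)"
    by (rule nn_integral_cong_AE) (use ae in eventually_elim, simp)
  have "rel_entropy Pg Pf = enn2ereal (\<integral>\<^sup>+x. ennreal (g x - f x) \<partial>Pg) - enn2ereal (\<integral>\<^sup>+x. ennreal (- (g x - f x)) \<partial>Pg)"
    unfolding rel_entropy_def using sets ac n1 n2 by (simp add: Let_def)
  also have "\<dots> = ereal (\<integral>z. g z - f z \<partial>Pg)"
    by (rule ereal_integral_split) (use int in \<open>simp add: Pg_def\<close>)
  finally show ?thesis unfolding Pg_def Pf_def .
qed

locale setting =
  fixes \<mu> :: "'z::polish_space measure" and Pstar :: "'z measure" and lstar :: "'z \<Rightarrow> real"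
    and M :: "'w measure" and Z :: "nat \<Rightarrow> 'w \<Rightarrow> 'z" and \<Theta> :: "nat \<Rightarrow> 't::metric_space set"
    and ell :: "'t \<Rightarrow> 'z \<Rightarrow> real" and l u :: "'z \<Rightarrow> real" and pen :: "nat \<Rightarrow> nat \<Rightarrow> real"
  assumes mu_sets: "sets \<mu> = sets (borel :: 'z measure)"
    and lstar_m: "lstar \<in> borel_measurable borel"
    and Pstar_eq: "Pstar = density \<mu> (\<lambda>z. ennreal (exp (lstar z)))"
    and Pstar_prob: "prob_space Pstar"
    and models: "\<And>K \<theta>. K \<ge> 1 \<Longrightarrow> \<theta> \<in> \<Theta> K \<Longrightarrow>
        ell \<theta> \<in> borel_measurable borel \<and> prob_space (density \<mu> (\<lambda>z. ennreal (exp (ell \<theta> z))))"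
    and M_prob: "prob_space M" and Zm: "\<And>i. Z i \<in> measurable M borel"
    and indZ: "prob_space.indep_vars M (\<lambda>_. borel) Z UNIV"
    and idZ: "\<And>i. distr M borel (Z i) = Pstar"
    and cpt: "\<And>K. K \<ge> 1 \<Longrightarrow> compact (\<Theta> K)"
    and cont: "\<And>K z. K \<ge> 1 \<Longrightarrow> continuous_on (\<Theta> K) (\<lambda>\<theta>. ell \<theta> z)"
    and int_ul: "integrable Pstar (\<lambda>z. u z - l z)"
    and bnd_star: "\<And>z. l z \<le> lstar z \<and> lstar z \<le> u z"
    and bnd: "\<And>K \<theta> z. K \<ge> 1 \<Longrightarrow> \<theta> \<in> \<Theta> K \<Longrightarrow> l z \<le> ell \<theta> z \<and> ell \<theta> z \<le> u z"
    and pen_pos: "\<And>n K. K \<ge> 1 \<Longrightarrow> pen n K > 0"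
    and pen_o: "\<And>K. K \<ge> 1 \<Longrightarrow> (\<lambda>n. pen n K / real n) \<longlonglongrightarrow> 0"
    and gaps: "\<And>K. K \<ge> 1 \<Longrightarrow>
        0 < rel_entropy_set Pstar ((\<lambda>\<theta>. density \<mu> (\<lambda>z. ennreal (exp (ell \<theta> z)))) ` \<Theta> (Suc K)) \<and>
        rel_entropy_set Pstar ((\<lambda>\<theta>. density \<mu> (\<lambda>z. ennreal (exp (ell \<theta> z)))) ` \<Theta> (Suc K))
          < rel_entropy_set Pstar ((\<lambda>\<theta>. density \<mu> (\<lambda>z. ennreal (exp (ell \<theta> z)))) ` \<Theta> K)"
begin

abbreviation dens :: "'t \<Rightarrow> 'z measure" where
  "dens \<theta> \<equiv> density \<mu> (\<lambda>z. ennreal (exp (ell \<theta> z)))"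

definition Hth :: "'t \<Rightarrow> real" where
  "Hth \<theta> = (\<integral>z. lstar z - ell \<theta> z \<partial>Pstar)"

definition HK :: "nat \<Rightarrow> ereal" where
  "HK K = rel_entropy_set Pstar (dens ` \<Theta> K)"

lemma sets_Pstar: "sets Pstar = sets borel"
  unfolding Pstar_eq using mu_sets by simp

lemma meas_Pstar: "f \<in> borel_measurable borel \<Longrightarrow> f \<in> borel_measurable Pstar"
  by (subst measurable_cong_sets[OF sets_Pstar refl])

lemma meas_mu: "f \<in> borel_measurable borel \<Longrightarrow> f \<in> borel_measurable \<mu>"
  by (subst measurable_cong_sets[OF mu_sets refl])

lemma ell_m: "K \<ge> 1 \<Longrightarrow> \<theta> \<in> \<Theta> K \<Longrightarrow> ell \<theta> \<in> borel_measurable borel"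
  using models by blast

lemma int_diff:
  assumes f: "f \<in> borel_measurable borel" and g: "g \<in> borel_measurable borel"
    and fb: "\<And>z. l z \<le> f z \<and> f z \<le> u z" and gb: "\<And>z. l z \<le> g z \<and> g z \<le> u z"
  shows "integrable Pstar (\<lambda>z. f z - g z)"
proof (rule Bochner_Integration.integrable_bound[OF int_ul])
  show "(\<lambda>z. f z - g z) \<in> borel_measurable Pstar" using f g by (intro meas_Pstar) simp
  show "AE z in Pstar. norm (f z - g z) \<le> norm (u z - l z)"
    using fb gb by (intro AE_I2) (smt (verit) real_norm_def)
qed

lemma Hth_int: "K \<ge> 1 \<Longrightarrow> \<theta> \<in> \<Theta> K \<Longrightarrow> integrable Pstar (\<lambda>z. lstar z - ell \<theta> z)"
  by (rule int_diff[OF lstar_m ell_m bnd_star bnd])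

lemma rel_ent_th:
  assumes K: "K \<ge> 1" and th: "\<theta> \<in> \<Theta> K"
  shows "rel_entropy Pstar (dens \<theta>) = ereal (Hth \<theta>)"
proof -
  have "rel_entropy Pstar (dens \<theta>) = ereal (\<integral>z. lstar z - ell \<theta> z \<partial>Pstar)"
    unfolding Pstar_eq
    by (rule rel_entropy_dens)
       (use models[OF K th] lstar_m Hth_int[OF K th] in \<open>auto simp: Pstar_eq intro: meas_mu\<close>)
  then show ?thesis unfolding Hth_def .
qed

lemma HK_eq: "K \<ge> 1 \<Longrightarrow> HK K = (INF \<theta>\<in>\<Theta> K. ereal (Hth \<theta>))"
  unfolding HK_def rel_entropy_set_def image_comp comp_def
  by (intro INF_cong refl rel_ent_th) auto

lemma gapsK: "K \<ge> 1 \<Longrightarrow> 0 < HK (Suc K) \<and> HK (Suc K) < HK K"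
  unfolding HK_def using gaps by blast

lemma not_in: "K \<ge> 1 \<Longrightarrow> Pstar \<notin> dens ` \<Theta> K"
proof
  assume K: "K \<ge> 1" and P: "Pstar \<in> dens ` \<Theta> K"
  have "HK K \<le> rel_entropy Pstar Pstar" unfolding HK_def rel_entropy_set_def
    using P by (rule INF_lower)
  also have "\<dots> = 0" by (rule rel_entropy_self[OF Pstar_prob])
  finally have "HK K \<le> 0" .
  moreover have "0 < HK K" using gapsK[OF K] by (meson order.strict_trans)
  ultimately show False by simp
qed

end

lemma compact_dense_countable:
  fixes S :: "'t::metric_space set"
  assumes "compact S"
  obtains D where "countable D" "D \<subseteq> S" "\<And>x e. x \<in> S \<Longrightarrow> e > 0 \<Longrightarrow> \<exists>d\<in>D. dist d x < e"
proof -
  have "\<exists>F. finite F \<and> F \<subseteq> S \<and> S \<subseteq> (\<Union>x\<in>F. ball x (1 / real (Suc j)))" for j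
  proof -
    have "S \<subseteq> (\<Union>x\<in>S. ball x (1 / real (Suc j)))"
    proof
      fix y assume "y \<in> S" then show "y \<in> (\<Union>x\<in>S. ball x (1 / real (Suc j)))" by (intro UN_I[of y]) auto
    qed
    from compactE_image[OF assms _ this] obtain C' where "C' \<subseteq> S" "finite C'" "S \<subseteq> (\<Union>x\<in>C'. ball x (1 / real (Suc j)))"
      by auto
    then show ?thesis by blast
  qed
  then obtain F where F: "\<And>j. finite (F j) \<and> F j \<subseteq> S \<and> S \<subseteq> (\<Union>x\<in>F j. ball x (1 / real (Suc j)))"
    by metis
  define D where "D = (\<Union>j. F j)"
  have "countable D" unfolding D_def using F by (intro countable_UN) (auto intro: countable_finite)
  moreover have "D \<subseteq> S" unfolding D_def using F by auto
  moreover have "\<exists>d\<in>D. dist d x < e" if x: "x \<in> S" and e: "e > 0" for x e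
  proof -
    obtain j where j: "1 / real (Suc j) < e" using e by (metis nat_approx_posE)
    from F[of j] x obtain d where d: "d \<in> F j" "x \<in> ball d (1 / real (Suc j))" by blast
    then have "dist d x < e" using j by simp
    with d show ?thesis unfolding D_def by blast
  qed
  ultimately show ?thesis using that by blast
qed

lemma G_ge:
  fixes ell :: "'t::metric_space \<Rightarrow> 'z \<Rightarrow> real"
  assumes DS: "D \<subseteq> S" and dense: "\<And>x e. x \<in> S \<Longrightarrow> e > 0 \<Longrightarrow> \<exists>d\<in>D. dist d x < e"
    and cont: "continuous_on S (\<lambda>\<theta>. ell \<theta> z)" and ub: "\<And>\<theta>. \<theta> \<in> S \<Longrightarrow> ell \<theta> z \<le> U"
    and th: "\<theta> \<in> S" and dd: "dist \<theta>0 \<theta> < \<delta>"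
  shows "ell \<theta> z \<le> (SUP d\<in>D \<inter> ball \<theta>0 \<delta>. ell d z)"
proof (rule field_le_epsilon)
  fix e :: real assume e: "e > 0"
  obtain \<eta> where \<eta>: "\<eta> > 0" "\<And>x'. x' \<in> S \<Longrightarrow> dist x' \<theta> < \<eta> \<Longrightarrow> dist (ell x' z) (ell \<theta> z) < e"
    using cont th e unfolding continuous_on_iff by metis
  define r where "r = min \<eta> (\<delta> - dist \<theta>0 \<theta>)"
  have r: "r > 0" unfolding r_def using \<eta> dd by simp
  obtain d where d: "d \<in> D" "dist d \<theta> < r" using dense[OF th r] by blast
  have dS: "d \<in> S" using d DS by auto
  have "dist \<theta>0 d \<le> dist \<theta>0 \<theta> + dist d \<theta>" by (rule dist_triangle2)
  then have db: "d \<in> ball \<theta>0 \<delta>" using d(2) unfolding r_def by simp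
  have "dist (ell d z) (ell \<theta> z) < e" using \<eta>(2)[OF dS] d(2) unfolding r_def by simp
  then have "ell \<theta> z < ell d z + e" by (simp add: dist_real_def abs_less_iff)
  moreover have "ell d z \<le> (SUP d\<in>D \<inter> ball \<theta>0 \<delta>. ell d z)"
    by (rule cSUP_upper) (use d db DS ub in \<open>auto intro!: bdd_aboveI2\<close>)
  ultimately show "ell \<theta> z \<le> (SUP d\<in>D \<inter> ball \<theta>0 \<delta>. ell d z) + e" by simp
qed

lemma G_conv:
  fixes ell :: "'t::metric_space \<Rightarrow> 'z \<Rightarrow> real"
  assumes DS: "D \<subseteq> S" and dense: "\<And>x e. x \<in> S \<Longrightarrow> e > 0 \<Longrightarrow> \<exists>d\<in>D. dist d x < e"
    and cont: "continuous_on S (\<lambda>\<theta>. ell \<theta> z)" and ub: "\<And>\<theta>. \<theta> \<in> S \<Longrightarrow> ell \<theta> z \<le> U"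
    and th: "\<theta>0 \<in> S"
  shows "(\<lambda>j. SUP d\<in>D \<inter> ball \<theta>0 (1 / real (Suc j)). ell d z) \<longlonglongrightarrow> ell \<theta>0 z"
proof (rule tendstoI)
  fix e :: real assume e: "e > 0"
  then have e2: "e / 2 > 0" by simp
  obtain \<eta> where \<eta>: "\<eta> > 0" "\<And>x'. x' \<in> S \<Longrightarrow> dist x' \<theta>0 < \<eta> \<Longrightarrow> dist (ell x' z) (ell \<theta>0 z) < e / 2"
    using cont th e2 unfolding continuous_on_iff by metis
  obtain N where N: "1 / real (Suc N) < \<eta>" using \<eta>(1) by (metis nat_approx_posE)
  show "\<forall>\<^sub>F j in sequentially. dist (SUP d\<in>D \<inter> ball \<theta>0 (1 / real (Suc j)). ell d z) (ell \<theta>0 z) < e"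
    unfolding eventually_sequentially
  proof (intro exI[of _ N] allI impI)
    fix j assume j: "N \<le> j"
    define \<delta> where "\<delta> = 1 / real (Suc j)"
    have \<delta>: "\<delta> > 0" "\<delta> < \<eta>"
    proof -
      show "\<delta> > 0" unfolding \<delta>_def by simp
      have "\<delta> \<le> 1 / real (Suc N)" unfolding \<delta>_def using j by (intro divide_left_mono) auto
      then show "\<delta> < \<eta>" using N by simp
    qed
    have lo: "ell \<theta>0 z \<le> (SUP d\<in>D \<inter> ball \<theta>0 \<delta>. ell d z)"
      by (rule G_ge[where ell=ell and z=z and U=U, OF DS dense cont ub th]) (use \<delta> in auto)
    have ne: "D \<inter> ball \<theta>0 \<delta> \<noteq> {}"
    proof -
      obtain d where "d \<in> D" "dist d \<theta>0 < \<delta>" using dense[OF th \<delta>(1)] by blast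
      then show ?thesis by (auto simp: dist_commute)
    qed
    have up: "(SUP d\<in>D \<inter> ball \<theta>0 \<delta>. ell d z) \<le> ell \<theta>0 z + e / 2"
    proof (rule cSUP_least[OF ne])
      fix d assume d: "d \<in> D \<inter> ball \<theta>0 \<delta>"
      then have "d \<in> S" "dist d \<theta>0 < \<eta>" using DS \<delta> by (auto simp: dist_commute)
      then have "dist (ell d z) (ell \<theta>0 z) < e / 2" by (rule \<eta>(2))
      then show "ell d z \<le> ell \<theta>0 z + e / 2" unfolding dist_real_def by linarith
    qed
    show "dist (SUP d\<in>D \<inter> ball \<theta>0 (1 / real (Suc j)). ell d z) (ell \<theta>0 z) < e"
      using lo up e unfolding \<delta>_def[symmetric] by (simp add: dist_real_def abs_le_iff)
  qed
qed

context setting begin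

lemma crit_eq: "crit ell \<Theta> pen Z n K \<omega> = (SUP \<theta>\<in>\<Theta> K. ereal (\<Sum>i<n. ell \<theta> (Z i \<omega>))) - ereal (pen n K)"
  by (simp add: crit_def)

lemma ne_Suc: assumes K: "K \<ge> 1" shows "\<Theta> (Suc K) \<noteq> {}"
proof
  assume e: "\<Theta> (Suc K) = {}"
  have "HK (Suc K) = top" using HK_eq[of "Suc K"] e by simp
  with gapsK[OF K] show False by simp
qed

lemma empty_case:
  assumes K: "K \<ge> 1" and e: "\<Theta> K = {}"
  shows "crit ell \<Theta> pen Z n K \<omega> < crit ell \<Theta> pen Z n (Suc K) \<omega>"
proof -
  obtain \<theta> where th: "\<theta> \<in> \<Theta> (Suc K)" using ne_Suc[OF K] by blast
  have "crit ell \<Theta> pen Z n K \<omega> = -\<infinity>" unfolding crit_eq e by (simp add: bot_ereal_def)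
  moreover have "ereal (\<Sum>i<n. ell \<theta> (Z i \<omega>)) - ereal (pen n (Suc K)) \<le> crit ell \<Theta> pen Z n (Suc K) \<omega>"
    unfolding crit_eq by (intro ereal_minus_mono SUP_upper th) simp
  ultimately show ?thesis by (metis MInfty_neq_ereal(1) ereal_minus(1) ereal_infty_less(2) order_less_le_trans)
qed

end

context setting begin

lemma main_K:
  assumes K: "K \<ge> 1" and ne: "\<Theta> K \<noteq> {}"
  shows "AE \<omega> in M. eventually (\<lambda>n. crit ell \<Theta> pen Z n K \<omega> < crit ell \<Theta> pen Z n (Suc K) \<omega>) sequentially"
proof -
  interpret Mp: prob_space M by (rule M_prob)
  obtain D where Dc: "countable D" and DS: "D \<subseteq> \<Theta> K"
    and dense: "\<And>x e. x \<in> \<Theta> K \<Longrightarrow> e > 0 \<Longrightarrow> \<exists>d\<in>D. dist d x < e"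
    using compact_dense_countable[OF cpt[OF K]] by metis
  obtain \<theta>a where \<theta>a: "\<theta>a \<in> \<Theta> K" using ne by blast
  have HKle: "HK K \<le> ereal (Hth \<theta>)" if "\<theta> \<in> \<Theta> K" for \<theta>
    unfolding HK_eq[OF K] using that by (rule INF_lower)
  have K1: "Suc K \<ge> 1" by simp
  obtain \<theta>1 where th1: "\<theta>1 \<in> \<Theta> (Suc K)" and th1l: "ereal (Hth \<theta>1) < HK K"
    using gapsK[OF K] unfolding HK_eq[OF K1] INF_less_iff by blast
  have "HK K \<noteq> \<infinity>" using HKle[OF \<theta>a] by auto
  moreover have "HK K \<noteq> -\<infinity>" using th1l by auto
  ultimately obtain hK where hK: "HK K = ereal hK" by (cases "HK K") auto
  define c where "c = hK - Hth \<theta>1"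
  have c: "c > 0" using th1l unfolding hK c_def by simp
  have hKle: "hK \<le> Hth \<theta>" if "\<theta> \<in> \<Theta> K" for \<theta> using HKle[OF that] unfolding hK by simp
  have th1m: "ell \<theta>1 \<in> borel_measurable borel" by (rule ell_m[OF K1 th1])
  have bnd1: "l z \<le> ell \<theta>1 z \<and> ell \<theta>1 z \<le> u z" for z by (rule bnd[OF K1 th1])
  define G where "G \<theta>0 \<delta> z = (SUP d\<in>D \<inter> ball \<theta>0 \<delta>. ell d z)" for \<theta>0 \<delta> z
  have ub: "\<And>\<theta>. \<theta> \<in> \<Theta> K \<Longrightarrow> ell \<theta> z \<le> u z" for z using bnd[OF K] by blast
  have Gge: "ell \<theta> z \<le> G \<theta>0 \<delta> z" if "\<theta> \<in> \<Theta> K" "dist \<theta>0 \<theta> < \<delta>" for \<theta> \<theta>0 \<delta> z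
    unfolding G_def by (rule G_ge[OF DS dense cont[OF K] ub that])
  have Gne: "D \<inter> ball \<theta>0 \<delta> \<noteq> {}" if a1: "\<theta>0 \<in> \<Theta> K" and a2: "\<delta> > 0" for \<theta>0 \<delta>
  proof -
    obtain d where "d \<in> D" "dist d \<theta>0 < \<delta>" using dense[OF a1 a2] by blast
    then show ?thesis by (auto simp: dist_commute)
  qed
  have Gle: "G \<theta>0 \<delta> z \<le> u z" if "\<theta>0 \<in> \<Theta> K" "\<delta> > 0" for \<theta>0 \<delta> z
    unfolding G_def by (rule cSUP_least[OF Gne[OF that]]) (use DS ub in auto)
  have Gbnd: "l z \<le> G \<theta>0 \<delta> z \<and> G \<theta>0 \<delta> z \<le> u z" if "\<theta>0 \<in> \<Theta> K" "\<delta> > 0" for \<theta>0 \<delta> z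
  proof
    have "l z \<le> ell \<theta>0 z" using bnd[OF K that(1)] by blast
    also have "\<dots> \<le> G \<theta>0 \<delta> z" by (rule Gge) (use that in auto)
    finally show "l z \<le> G \<theta>0 \<delta> z" .
    show "G \<theta>0 \<delta> z \<le> u z" by (rule Gle[OF that])
  qed
  have Gm: "G \<theta>0 \<delta> \<in> borel_measurable borel" for \<theta>0 \<delta>
    unfolding G_def[abs_def]
  proof (rule borel_measurable_cSUP)
    show "countable (D \<inter> ball \<theta>0 \<delta>)" using Dc by (rule countable_subset[rotated]) auto
    show "ell i \<in> borel_measurable borel" if "i \<in> D \<inter> ball \<theta>0 \<delta>" for i
      using that DS by (intro ell_m[OF K]) auto
    show "bdd_above ((\<lambda>i. ell i z) ` (D \<inter> ball \<theta>0 \<delta>))" for z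
      using DS ub by (intro bdd_aboveI2[where M="u z"]) auto
  qed
  define g where "g \<theta>0 \<delta> z = G \<theta>0 \<delta> z - ell \<theta>1 z" for \<theta>0 \<delta> z
  have gint: "integrable Pstar (g \<theta>0 \<delta>)" if "\<theta>0 \<in> \<Theta> K" "\<delta> > 0" for \<theta>0 \<delta>
    unfolding g_def by (rule int_diff[OF Gm th1m Gbnd[OF that] bnd1])
  have gm: "g \<theta>0 \<delta> \<in> borel_measurable borel" for \<theta>0 \<delta>
    unfolding g_def using Gm th1m by measurable
  have exd: "\<exists>\<delta>>0. (\<integral>z. g \<theta>0 \<delta> z \<partial>Pstar) < - c / 2" if th0: "\<theta>0 \<in> \<Theta> K" for \<theta>0
  proof -
    have lim: "(\<lambda>j. \<integral>z. g \<theta>0 (1 / real (Suc j)) z \<partial>Pstar) \<longlonglongrightarrow> (\<integral>z. ell \<theta>0 z - ell \<theta>1 z \<partial>Pstar)"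
    proof (rule integral_dominated_convergence[where w="\<lambda>z. u z - l z"])
      show "(\<lambda>z. ell \<theta>0 z - ell \<theta>1 z) \<in> borel_measurable Pstar"
        using ell_m[OF K th0] th1m by (intro meas_Pstar) measurable
      show "g \<theta>0 (1 / real (Suc j)) \<in> borel_measurable Pstar" for j by (intro meas_Pstar gm)
      show "integrable Pstar (\<lambda>z. u z - l z)" by (rule int_ul)
      show "AE z in Pstar. (\<lambda>j. g \<theta>0 (1 / real (Suc j)) z) \<longlonglongrightarrow> ell \<theta>0 z - ell \<theta>1 z"
      proof (intro AE_I2)
        fix z
        have "(\<lambda>j. G \<theta>0 (1 / real (Suc j)) z) \<longlonglongrightarrow> ell \<theta>0 z"
          unfolding G_def by (rule G_conv[OF DS dense cont[OF K] ub th0])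
        then show "(\<lambda>j. g \<theta>0 (1 / real (Suc j)) z) \<longlonglongrightarrow> ell \<theta>0 z - ell \<theta>1 z"
          unfolding g_def by (intro tendsto_diff) auto
      qed
      show "AE z in Pstar. norm (g \<theta>0 (1 / real (Suc j)) z) \<le> u z - l z" for j
      proof (intro AE_I2)
        fix z
        have "l z \<le> G \<theta>0 (1 / real (Suc j)) z \<and> G \<theta>0 (1 / real (Suc j)) z \<le> u z"
          by (rule Gbnd[OF th0]) simp
        then show "norm (g \<theta>0 (1 / real (Suc j)) z) \<le> u z - l z"
          using bnd1[of z] unfolding g_def by auto
      qed
    qed
    have "(\<integral>z. ell \<theta>0 z - ell \<theta>1 z \<partial>Pstar) = (\<integral>z. (lstar z - ell \<theta>1 z) - (lstar z - ell \<theta>0 z) \<partial>Pstar)"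
      by (rule Bochner_Integration.integral_cong) auto
    also have "\<dots> = Hth \<theta>1 - Hth \<theta>0" unfolding Hth_def
      by (rule Bochner_Integration.integral_diff[OF Hth_int[OF K1 th1] Hth_int[OF K th0]])
    also have "\<dots> \<le> - c" using hKle[OF th0] unfolding c_def by simp
    finally have "(\<integral>z. ell \<theta>0 z - ell \<theta>1 z \<partial>Pstar) < - c / 2" using c by simp
    from order_tendstoD(2)[OF lim this] obtain N where
      "\<forall>j\<ge>N. (\<integral>z. g \<theta>0 (1 / real (Suc j)) z \<partial>Pstar) < - c / 2"
      unfolding eventually_sequentially by blast
    then show ?thesis by (intro exI[of _ "1 / real (Suc N)"]) auto
  qed
  then obtain \<delta>f where \<delta>f: "\<And>\<theta>0. \<theta>0 \<in> \<Theta> K \<Longrightarrow> \<delta>f \<theta>0 > 0 \<and> (\<integral>z. g \<theta>0 (\<delta>f \<theta>0) z \<partial>Pstar) < - c / 2"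
    by metis
  have cover: "\<Theta> K \<subseteq> (\<Union>\<theta>0\<in>\<Theta> K. ball \<theta>0 (\<delta>f \<theta>0))"
  proof
    fix y assume "y \<in> \<Theta> K" then show "y \<in> (\<Union>\<theta>0\<in>\<Theta> K. ball \<theta>0 (\<delta>f \<theta>0))"
      using \<delta>f by (intro UN_I[of y]) auto
  qed
  obtain F where FK: "F \<subseteq> \<Theta> K" and Ff: "finite F" and Fc: "\<Theta> K \<subseteq> (\<Union>\<theta>0\<in>F. ball \<theta>0 (\<delta>f \<theta>0))"
    using compactE_image[OF cpt[OF K] _ cover] by auto
  have slln: "AE \<omega> in M. \<forall>\<theta>0\<in>F. (\<lambda>n. (\<Sum>i<n. g \<theta>0 (\<delta>f \<theta>0) (Z i \<omega>)) / real n) \<longlonglongrightarrow> (\<integral>z. g \<theta>0 (\<delta>f \<theta>0) z \<partial>Pstar)"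
  proof (rule AE_finite_allI[OF Ff])
    fix \<theta>0 assume "\<theta>0 \<in> F"
    then have th0: "\<theta>0 \<in> \<Theta> K" using FK by auto
    show "AE \<omega> in M. (\<lambda>n. (\<Sum>i<n. g \<theta>0 (\<delta>f \<theta>0) (Z i \<omega>)) / real n) \<longlonglongrightarrow> (\<integral>z. g \<theta>0 (\<delta>f \<theta>0) z \<partial>Pstar)"
      by (rule Mp.slln_fun[OF Zm indZ idZ gm gint[OF th0]]) (use \<delta>f[OF th0] in auto)
  qed
  have penev: "eventually (\<lambda>n. pen n (Suc K) / real n < c / 2) sequentially"
    using order_tendstoD(2)[OF pen_o[OF K1], of "c / 2"] c by simp
  from slln show ?thesis
  proof eventually_elim
    case (elim \<omega>)
    have ev1: "eventually (\<lambda>n. \<forall>\<theta>0\<in>F. (\<Sum>i<n. g \<theta>0 (\<delta>f \<theta>0) (Z i \<omega>)) / real n < - c / 2) sequentially"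
    proof (rule eventually_ball_finite[OF Ff], rule ballI)
      fix \<theta>0 assume F0: "\<theta>0 \<in> F"
      then have th0: "\<theta>0 \<in> \<Theta> K" using FK by auto
      show "eventually (\<lambda>n. (\<Sum>i<n. g \<theta>0 (\<delta>f \<theta>0) (Z i \<omega>)) / real n < - c / 2) sequentially"
        using order_tendstoD(2)[OF elim[rule_format, OF F0]] \<delta>f[OF th0] by blast
    qed
    have ev2: "eventually (\<lambda>n. n \<ge> 1) sequentially" by (rule eventually_ge_at_top)
    from ev1 penev ev2 show ?case
    proof eventually_elim
      case (elim n)
      have np: "real n > 0" using elim(3) by simp
      define L1 where "L1 = (\<Sum>i<n. ell \<theta>1 (Z i \<omega>))"
      have bound: "(\<Sum>i<n. ell \<theta> (Z i \<omega>)) \<le> L1 - c * real n / 2" if th: "\<theta> \<in> \<Theta> K" for \<theta>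
      proof -
        obtain \<theta>0 where F0: "\<theta>0 \<in> F" and b: "\<theta> \<in> ball \<theta>0 (\<delta>f \<theta>0)" using Fc th by blast
        have "(\<Sum>i<n. ell \<theta> (Z i \<omega>)) \<le> (\<Sum>i<n. G \<theta>0 (\<delta>f \<theta>0) (Z i \<omega>))"
          by (intro sum_mono Gge th) (use b in simp)
        also have "\<dots> = (\<Sum>i<n. g \<theta>0 (\<delta>f \<theta>0) (Z i \<omega>)) + L1"
          unfolding g_def L1_def by (simp add: sum_subtractf)
        also have "(\<Sum>i<n. g \<theta>0 (\<delta>f \<theta>0) (Z i \<omega>)) < - c / 2 * real n"
          using elim(1) F0 np by (simp add: pos_divide_less_eq)
        finally show ?thesis by simp
      qed
      have supK: "(SUP \<theta>\<in>\<Theta> K. ereal (\<Sum>i<n. ell \<theta> (Z i \<omega>))) \<le> ereal (L1 - c * real n / 2)"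
        by (rule SUP_least) (use bound in simp)
      have pK: "pen n K > 0" by (rule pen_pos[OF K])
      have pK1: "pen n (Suc K) < c * real n / 2" using elim(2) np by (simp add: divide_less_eq)
      have "crit ell \<Theta> pen Z n K \<omega> \<le> ereal (L1 - c * real n / 2) - ereal (pen n K)"
        unfolding crit_eq by (rule ereal_minus_mono[OF supK order_refl])
      also have "\<dots> < ereal L1 - ereal (pen n (Suc K))" using pK pK1 by simp
      also have "\<dots> \<le> crit ell \<Theta> pen Z n (Suc K) \<omega>"
        unfolding crit_eq L1_def by (intro ereal_minus_mono SUP_upper th1 order_refl)
      finally show ?case .
    qed
  qed
qed

end

context setting begin

lemma all_K: "AE \<omega> in M. \<forall>K. K \<ge> 1 \<longrightarrow> eventually (\<lambda>n. crit ell \<Theta> pen Z n K \<omega> < crit ell \<Theta> pen Z n (Suc K) \<omega>) sequentially"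
  unfolding AE_all_countable
proof
  fix K :: nat
  show "AE \<omega> in M. K \<ge> 1 \<longrightarrow> eventually (\<lambda>n. crit ell \<Theta> pen Z n K \<omega> < crit ell \<Theta> pen Z n (Suc K) \<omega>) sequentially"
  proof (cases "K \<ge> 1")
    case False then show ?thesis by simp
  next
    case K: True
    show ?thesis
    proof (cases "\<Theta> K = {}")
      case True
      show ?thesis using empty_case[OF K True] by (intro AE_I2 impI always_eventually allI) auto
    next
      case False
      show ?thesis using main_K[OF K False] by (rule AE_mp) (intro AE_I2 impI)
    qed
  qed
qed

lemma Khat_L_big:
  assumes "\<forall>K\<in>{1..K0}. crit ell \<Theta> pen Z n K \<omega> < crit ell \<Theta> pen Z n (Suc K) \<omega>"
  shows "enat K0 < Khat_L ell \<Theta> pen Z n \<omega>"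
proof (cases "\<exists>K\<ge>1. crit ell \<Theta> pen Z n K \<omega> \<ge> crit ell \<Theta> pen Z n (Suc K) \<omega>")
  case True
  define m where "m = (LEAST K. K \<ge> 1 \<and> crit ell \<Theta> pen Z n K \<omega> \<ge> crit ell \<Theta> pen Z n (Suc K) \<omega>)"
  have m: "m \<ge> 1 \<and> crit ell \<Theta> pen Z n m \<omega> \<ge> crit ell \<Theta> pen Z n (Suc m) \<omega>"
    unfolding m_def by (rule LeastI_ex) (rule True)
  have "K0 < m"
  proof (rule ccontr)
    assume "\<not> K0 < m"
    then have "m \<in> {1..K0}" using m by auto
    with assms m show False by fastforce
  qed
  then show ?thesis unfolding Khat_L_def m_def[symmetric] using True by simp
next
  case False
  then show ?thesis unfolding Khat_L_def if_not_P[OF False] by simp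
qed

lemma Khat_G_big:
  assumes "\<forall>K\<in>{1..K0}. crit ell \<Theta> pen Z n K \<omega> < crit ell \<Theta> pen Z n (Suc K) \<omega>"
  shows "enat K0 < Khat_G ell \<Theta> pen Z n \<omega>"
proof (cases "\<exists>K\<ge>1. \<forall>K'\<ge>1. crit ell \<Theta> pen Z n K' \<omega> \<le> crit ell \<Theta> pen Z n K \<omega>")
  case True
  define m where "m = (LEAST K. K \<ge> 1 \<and> (\<forall>K'\<ge>1. crit ell \<Theta> pen Z n K' \<omega> \<le> crit ell \<Theta> pen Z n K \<omega>))"
  have m: "m \<ge> 1 \<and> (\<forall>K'\<ge>1. crit ell \<Theta> pen Z n K' \<omega> \<le> crit ell \<Theta> pen Z n m \<omega>)"
    unfolding m_def by (rule LeastI_ex) (use True in blast)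
  have "K0 < m"
  proof (rule ccontr)
    assume "\<not> K0 < m"
    then have "m \<in> {1..K0}" using m by auto
    with assms have "crit ell \<Theta> pen Z n m \<omega> < crit ell \<Theta> pen Z n (Suc m) \<omega>" by blast
    moreover have "crit ell \<Theta> pen Z n (Suc m) \<omega> \<le> crit ell \<Theta> pen Z n m \<omega>" using m by simp
    ultimately show False by simp
  qed
  then show ?thesis unfolding Khat_G_def m_def[symmetric] using True by simp
next
  case False
  then show ?thesis unfolding Khat_G_def if_not_P[OF False] by simp
qed

lemma liminf_top:
  fixes f :: "nat \<Rightarrow> enat"
  assumes "\<And>K0. eventually (\<lambda>n. enat K0 < f n) sequentially"
  shows "liminf f = \<infinity>"
proof -
  have "\<infinity> \<le> liminf f"
    unfolding le_Liminf_iff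
  proof (intro allI impI)
    fix y :: enat assume "y < \<infinity>"
    then obtain K0 where "y = enat K0" by (cases y) auto
    then show "eventually (\<lambda>n. y < f n) sequentially" using assms by simp
  qed
  then show ?thesis by (simp add: top_unique[unfolded top_enat_def])
qed

lemma final:
  "Pstar \<notin> (\<Union>K\<in>{1..}. dens ` \<Theta> K) \<and>
    (AE \<omega> in M. liminf (\<lambda>n. Khat_L ell \<Theta> pen Z n \<omega>) = \<infinity> \<and>
                 liminf (\<lambda>n. Khat_G ell \<Theta> pen Z n \<omega>) = \<infinity>)"
proof
  show "Pstar \<notin> (\<Union>K\<in>{1..}. dens ` \<Theta> K)" using not_in by auto
  show "AE \<omega> in M. liminf (\<lambda>n. Khat_L ell \<Theta> pen Z n \<omega>) = \<infinity> \<and>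
                 liminf (\<lambda>n. Khat_G ell \<Theta> pen Z n \<omega>) = \<infinity>"
    using all_K
  proof eventually_elim
    case (elim \<omega>)
    have ev: "eventually (\<lambda>n. \<forall>K\<in>{1..K0}. crit ell \<Theta> pen Z n K \<omega> < crit ell \<Theta> pen Z n (Suc K) \<omega>) sequentially" for K0
      by (rule eventually_ball_finite) (use elim in auto)
    show ?case
    proof
      show "liminf (\<lambda>n. Khat_L ell \<Theta> pen Z n \<omega>) = \<infinity>"
      proof (rule liminf_top)
        fix K0 show "eventually (\<lambda>n. enat K0 < Khat_L ell \<Theta> pen Z n \<omega>) sequentially"
          using ev[of K0] by eventually_elim (rule Khat_L_big)
      qed
      show "liminf (\<lambda>n. Khat_G ell \<Theta> pen Z n \<omega>) = \<infinity>"
      proof (rule liminf_top)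
        fix K0 show "eventually (\<lambda>n. enat K0 < Khat_G ell \<Theta> pen Z n \<omega>) sequentially"
          using ev[of K0] by eventually_elim (rule Khat_G_big)
      qed
    qed
  qed
qed

end

theorem theorem5:
  fixes \<mu> :: "'z::polish_space measure"
    and Pstar :: "'z measure"
    and lstar :: "'z \<Rightarrow> real"
    and M :: "'w measure"
    and Z :: "nat \<Rightarrow> 'w \<Rightarrow> 'z"
    and \<Theta> :: "nat \<Rightarrow> 't::metric_space set"
    and ell :: "'t \<Rightarrow> 'z \<Rightarrow> real"
    and l u :: "'z \<Rightarrow> real"
    and pen :: "nat \<Rightarrow> nat \<Rightarrow> real"
  defines "Mdl \<equiv> (\<lambda>K. (\<lambda>\<theta>. density \<mu> (\<lambda>z. ennreal (exp (ell \<theta> z)))) ` \<Theta> K)"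
  assumes mu: "sigma_finite_measure \<mu>" "sets \<mu> = sets (borel :: 'z measure)"
    and Pstar: "lstar \<in> borel_measurable borel"
      "Pstar = density \<mu> (\<lambda>z. ennreal (exp (lstar z)))" "prob_space Pstar"
    and models: "\<And>K \<theta>. K \<ge> 1 \<Longrightarrow> \<theta> \<in> \<Theta> K \<Longrightarrow>
        ell \<theta> \<in> borel_measurable borel \<and> prob_space (density \<mu> (\<lambda>z. ennreal (exp (ell \<theta> z))))"
    and nested: "\<And>K. K \<ge> 1 \<Longrightarrow> \<Theta> K \<subseteq> \<Theta> (Suc K)"
    and iid: "prob_space M" "\<And>i. Z i \<in> measurable M borel"
      "prob_space.indep_vars M (\<lambda>_. borel) Z UNIV"
      "\<And>i. distr M borel (Z i) = Pstar"
    and A1: "\<And>K. K \<ge> 1 \<Longrightarrow> compact (\<Theta> K)"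
      "\<And>K. K \<ge> 1 \<Longrightarrow> compactin weak_topology (Mdl K)"
    and A2: "\<And>K z. K \<ge> 1 \<Longrightarrow> continuous_on (\<Theta> K) (\<lambda>\<theta>. ell \<theta> z)"
    and A3: "integrable Pstar (\<lambda>z. u z - l z)"
      "\<And>z. l z \<le> lstar z \<and> lstar z \<le> u z"
      "\<And>K \<theta> z. K \<ge> 1 \<Longrightarrow> \<theta> \<in> \<Theta> K \<Longrightarrow> l z \<le> ell \<theta> z \<and> ell \<theta> z \<le> u z"
    and A4: "\<And>n K. K \<ge> 1 \<Longrightarrow> pen n K > 0"
      "\<And>n K K'. 1 \<le> K \<Longrightarrow> K \<le> K' \<Longrightarrow> pen n K \<le> pen n K'"
      "\<And>K. K \<ge> 1 \<Longrightarrow> filterlim (\<lambda>n. pen n K) at_top sequentially"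
      "\<And>K. K \<ge> 1 \<Longrightarrow> (\<lambda>n. pen n K / real n) \<longlonglongrightarrow> 0"
    and gaps: "\<And>K. K \<ge> 1 \<Longrightarrow>
        0 < rel_entropy_set Pstar (Mdl (Suc K)) \<and>
        rel_entropy_set Pstar (Mdl (Suc K)) < rel_entropy_set Pstar (Mdl K)"
  shows "Pstar \<notin> (\<Union>K\<in>{1..}. Mdl K) \<and>
    (AE \<omega> in M. liminf (\<lambda>n. Khat_L ell \<Theta> pen Z n \<omega>) = \<infinity> \<and>
                 liminf (\<lambda>n. Khat_G ell \<Theta> pen Z n \<omega>) = \<infinity>)"
proof -
  interpret S: setting \<mu> Pstar lstar M Z \<Theta> ell l u pen
  proof (rule setting.intro)
    show "sets \<mu> = sets borel" by (rule mu(2))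
    show "lstar \<in> borel_measurable borel" by (rule Pstar(1))
    show "Pstar = density \<mu> (\<lambda>z. ennreal (exp (lstar z)))" by (rule Pstar(2))
    show "prob_space Pstar" by (rule Pstar(3))
    show "ell \<theta> \<in> borel_measurable borel \<and> prob_space (density \<mu> (\<lambda>z. ennreal (exp (ell \<theta> z))))"
      if "K \<ge> 1" "\<theta> \<in> \<Theta> K" for K \<theta> using models that by blast
    show "prob_space M" by (rule iid(1))
    show "Z i \<in> borel_measurable M" for i by (rule iid(2))
    show "prob_space.indep_vars M (\<lambda>_. borel) Z UNIV" by (rule iid(3))
    show "distr M borel (Z i) = Pstar" for i by (rule iid(4))
    show "compact (\<Theta> K)" if "K \<ge> 1" for K using A1(1) that by blast
    show "continuous_on (\<Theta> K) (\<lambda>\<theta>. ell \<theta> z)" if "K \<ge> 1" for K z using A2 that by blast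
    show "integrable Pstar (\<lambda>z. u z - l z)" by (rule A3(1))
    show "l z \<le> lstar z \<and> lstar z \<le> u z" for z by (rule A3(2))
    show "l z \<le> ell \<theta> z \<and> ell \<theta> z \<le> u z" if "K \<ge> 1" "\<theta> \<in> \<Theta> K" for K \<theta> z using A3(3) that by blast
    show "pen n K > 0" if "K \<ge> 1" for n K using A4(1) that by blast
    show "(\<lambda>n. pen n K / real n) \<longlonglongrightarrow> 0" if "K \<ge> 1" for K using A4(4) that by blast
    show "0 < rel_entropy_set Pstar ((\<lambda>\<theta>. density \<mu> (\<lambda>z. ennreal (exp (ell \<theta> z)))) ` \<Theta> (Suc K)) \<and>
        rel_entropy_set Pstar ((\<lambda>\<theta>. density \<mu> (\<lambda>z. ennreal (exp (ell \<theta> z)))) ` \<Theta> (Suc K))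
          < rel_entropy_set Pstar ((\<lambda>\<theta>. density \<mu> (\<lambda>z. ennreal (exp (ell \<theta> z)))) ` \<Theta> K)"
      if "K \<ge> 1" for K using gaps[OF that] unfolding Mdl_def by simp
  qed
  show ?thesis unfolding Mdl_def using S.final by simp
qed

end
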